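(* Let $1\le m\le n$ and let $f\in W^{1,1}_{\mathrm{loc}}(\mathbb{R}^n;\mathbb{R}^m)$ (a fixed pointwise defined representative). Let $\bar f(x)=(x,f(x))$, $\mathcal{G}_f=\bar f(\mathbb{R}^n)$ and $\pi:\mathbb{R}^{n+m}\to\mathbb{R}^n$, $\pi(x,x_{n+1},\dots,x_{n+m})=x$. Suppose there is $\theta\in L^1_{\mathrm{loc}}(\mathbb{R}^n)$ such that $$\mathcal{H}^{n-m}_\infty\bigl(\pi(\mathcal{G}_f\cap B(z,r))\bigr)\le r^{-m}\int_{\pi(\mathcal{G}_f\cap B(z,4r))}\theta(x)\,dx$$ for all $z\in\mathbb{R}^{n+m}$ and $r>0$. Then there is a constant $C=C(m,n)$ such that $$\mathcal{H}^n(\bar f(E))\le C\int_E\theta(x)\,dx$$ for all $\mathcal{L}^n$ measurable $E\subset\mathbb{R}^n$. In particular, $\bar f$ satisfies condition (N), i.e. $\mathcal{H}^n(\bar f(E))=0$ whenever $\mathcal{L}^n(E)=0$.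
   Context: For $q\ge0$, $\mathcal{H}^q_\infty(E)$ is the infimum of $\sum_j\boldsymbol\alpha_q(\mathrm{diam}\,E_j/2)^q$ over countable coverings $\{E_j\}$ of $E$, with $\boldsymbol\alpha_q=\pi^{q/2}/\Gamma(\frac q2+1)$; $\mathcal{H}^n$ is $n$-dimensional Hausdorff measure. *)

theory Defs
  imports "HOL-Analysis.Analysis"
begin

definition locally_integrable ::
  "('a::euclidean_space \<Rightarrow> 'b::{banach,second_countable_topology}) \<Rightarrow> bool" where
  "locally_integrable f \<longleftrightarrow> (\<forall>K. compact K \<longrightarrow> set_integrable lebesgue K f)"

fun Ck :: "nat \<Rightarrow> (real^'n \<Rightarrow> real) \<Rightarrow> bool" where
  "Ck 0 f = continuous_on UNIV f"
| "Ck (Suc k) f = (f differentiable_on UNIV \<and> continuous_on UNIV f \<and>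
      (\<forall>i. Ck k (\<lambda>x. frechet_derivative f (at x) (axis i 1))))"

definition Cinf :: "(real^'n \<Rightarrow> real) \<Rightarrow> bool" where
  "Cinf f \<longleftrightarrow> (\<forall>k. Ck k f)"

definition test_function :: "(real^'n \<Rightarrow> real) \<Rightarrow> bool" where
  "test_function \<phi> \<longleftrightarrow> Cinf \<phi> \<and> compact (closure {x. \<phi> x \<noteq> 0})"

definition W11_loc :: "(real^'n \<Rightarrow> real^'m) \<Rightarrow> bool" where
  "W11_loc f \<longleftrightarrow> locally_integrable f \<and>
     (\<exists>g :: 'n \<Rightarrow> real^'n \<Rightarrow> real^'m. \<forall>i. locally_integrable (g i) \<and>
        (\<forall>\<phi>. test_function \<phi> \<longrightarrow>
           (LINT x|lebesgue. frechet_derivative \<phi> (at x) (axis i 1) *\<^sub>R f x)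
             = - (LINT x|lebesgue. \<phi> x *\<^sub>R g i x)))"

definition alpha_q :: "real \<Rightarrow> real" where
  "alpha_q q = pi powr (q/2) / Gamma (q/2 + 1)"

definition ediam :: "'a::metric_space set \<Rightarrow> ennreal" where
  "ediam S = (if bounded S then ennreal (diameter S) else \<infinity>)"

text \<open>Contribution alpha_q (diam S / 2)^q of one covering set, with the conventions
  diam(empty)^q = 0 and t^0 = 1 (also for t = 0 or t = infinity).\<close>
definition hcontrib :: "real \<Rightarrow> 'a::metric_space set \<Rightarrow> ennreal" where
  "hcontrib q S = (if S = {} then 0 else if q = 0 then 1
      else if \<not> bounded S then \<infinity>
      else ennreal (alpha_q q * (diameter S / 2) powr q))"

text \<open>H^q_delta; delta = infinity gives the Hausdorff content H^q_infty.\<close>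
definition hausdorff_approx :: "ennreal \<Rightarrow> real \<Rightarrow> 'a::metric_space set \<Rightarrow> ennreal" where
  "hausdorff_approx \<delta> q E = (INF C \<in> {C :: nat \<Rightarrow> 'a set. E \<subseteq> (\<Union>j. C j) \<and> (\<forall>j. ediam (C j) \<le> \<delta>)}.
      (\<Sum>j. hcontrib q (C j)))"

definition hausdorff_content :: "real \<Rightarrow> 'a::metric_space set \<Rightarrow> ennreal" where
  "hausdorff_content q E = hausdorff_approx \<infinity> q E"

definition hausdorff_measure :: "real \<Rightarrow> 'a::metric_space set \<Rightarrow> ennreal" where
  "hausdorff_measure q E = (SUP \<delta> \<in> {0<..}. hausdorff_approx (ennreal \<delta>) q E)"

end

theory Submission
  imports Defs
begin

abbreviation HA where "HA \<equiv> hausdorff_approx"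

lemma hcontrib_empty[simp]: "hcontrib q {} = 0"
  by (simp add: hcontrib_def)

lemma HA_le_cover:
  assumes "E \<subseteq> (\<Union>j. C j)" "\<And>j. ediam (C j) \<le> \<delta>"
  shows "HA \<delta> q E \<le> (\<Sum>j. hcontrib q (C j))"
  unfolding hausdorff_approx_def by (rule INF_lower) (use assms in auto)

lemma HA_single:
  assumes "E \<subseteq> A" "ediam A \<le> \<delta>"
  shows "HA \<delta> q E \<le> hcontrib q A"
proof -
  define C where "C = (\<lambda>j::nat. if j = 0 then A else {})"
  have "HA \<delta> q E \<le> (\<Sum>j. hcontrib q (C j))"
    by (rule HA_le_cover) (use assms in \<open>auto simp: C_def ediam_def\<close>)
  also have "(\<lambda>j. hcontrib q (C j)) = (\<lambda>j. if j = 0 then hcontrib q A else 0)"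
    by (auto simp: C_def)
  also have "(\<Sum>j. (if j = 0 then hcontrib q A else 0)) = hcontrib q A"
    using sums_single[of 0 "\<lambda>_. hcontrib q A"] sums_unique by fastforce
  finally show ?thesis .
qed

lemma HA_mono: "E \<subseteq> F \<Longrightarrow> HA \<delta> q E \<le> HA \<delta> q F"
  unfolding hausdorff_approx_def by (rule INF_superset_mono) auto

lemma HA_close:
  "HA \<delta> q E < x \<Longrightarrow> \<exists>C. E \<subseteq> (\<Union>j. C j) \<and> (\<forall>j. ediam (C j) \<le> \<delta>) \<and> (\<Sum>j. hcontrib q (C j)) < x"
  unfolding hausdorff_approx_def INF_less_iff by auto

lemma HA_subadd: "HA \<delta> q (\<Union>i. A i) \<le> (\<Sum>i. HA \<delta> q (A i))"
proof (rule ennreal_le_epsilon)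
  fix e :: real assume "0 < e" "(\<Sum>n. HA \<delta> q (A n)) < top"
  then have *: "\<And>n. HA \<delta> q (A n) < HA \<delta> q (A n) + e * (1/2)^Suc n"
    by (auto simp add: less_top dest!: ennreal_suminf_lessD)
  have "\<forall>n. \<exists>C. A n \<subseteq> (\<Union>j. C j) \<and> (\<forall>j. ediam (C j) \<le> \<delta>) \<and> (\<Sum>j. hcontrib q (C j)) < HA \<delta> q (A n) + e * (1/2)^Suc n"
    using HA_close[OF *] by blast
  then obtain B where sbB: "\<And>n. A n \<subseteq> (\<Union>i. B n i)" and Bd: "\<And>n i. ediam (B n i) \<le> \<delta>"
      and Ble: "\<And>n. (\<Sum>i. hcontrib q (B n i)) \<le> HA \<delta> q (A n) + e * (1/2)^(Suc n)"
    by (metis less_imp_le)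
  define C where "C = case_prod B o prod_decode"
  have A_C: "(\<Union>i. A i) \<subseteq> (\<Union>i. C i)"
    using sbB by (auto simp add: C_def subset_eq) (metis prod.case prod_encode_inverse)
  have "HA \<delta> q (\<Union>i. A i) \<le> (\<Sum>i. hcontrib q (C i))"
    by (rule HA_le_cover[OF A_C]) (auto simp: C_def Bd split: prod.split)
  also have "\<dots> = (\<Sum>n. \<Sum>i. hcontrib q (B n i))"
    unfolding C_def comp_def by (intro suminf_ennreal_2dimen) auto
  also have "\<dots> \<le> (\<Sum>n. HA \<delta> q (A n) + e * (1/2) ^ Suc n)"
    by (intro suminf_le allI Ble) auto
  also have "... = (\<Sum>n. HA \<delta> q (A n)) + (\<Sum>n. ennreal e * ennreal ((1/2) ^ Suc n))"
    using \<open>0 < e\<close> by (subst suminf_add[symmetric])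
                     (auto simp del: ennreal_suminf_cmult simp add: ennreal_mult[symmetric])
  also have "\<dots> = (\<Sum>n. HA \<delta> q (A n)) + e"
    unfolding ennreal_suminf_cmult
    by (subst suminf_ennreal_eq[OF zero_le_power power_half_series]) auto
  finally show "HA \<delta> q (\<Union>i. A i) \<le> (\<Sum>n. HA \<delta> q (A n)) + e" .
qed

abbreviation HM where "HM \<equiv> hausdorff_measure"

lemma HA_le_HM: "\<delta> > 0 \<Longrightarrow> HA (ennreal \<delta>) q E \<le> HM q E"
  unfolding hausdorff_measure_def by (rule SUP_upper) auto

lemma HM_mono: "E \<subseteq> F \<Longrightarrow> HM q E \<le> HM q F"
  unfolding hausdorff_measure_def by (intro SUP_mono) (auto intro: HA_mono)

lemma HM_subadd: "HM q (\<Union>i. A i) \<le> (\<Sum>i. HM q (A i))"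
  unfolding hausdorff_measure_def
proof (rule SUP_least)
  fix \<delta> :: real assume "\<delta> \<in> {0<..}"
  have "HA (ennreal \<delta>) q (\<Union>i. A i) \<le> (\<Sum>i. HA (ennreal \<delta>) q (A i))" by (rule HA_subadd)
  also have "\<dots> \<le> (\<Sum>i. SUP \<delta>\<in>{0<..}. HA (ennreal \<delta>) q (A i))"
    using \<open>\<delta> \<in> _\<close> by (intro suminf_le allI SUP_upper) auto
  finally show "HA (ennreal \<delta>) q (\<Union>i. A i) \<le> (\<Sum>i. SUP \<delta>\<in>{0<..}. HA (ennreal \<delta>) q (A i))" .
qed

lemma HM_le_HA_bound:
  assumes "\<And>\<delta>. \<delta> > 0 \<Longrightarrow> HA (ennreal \<delta>) q E \<le> x"
  shows "HM q E \<le> x"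
  unfolding hausdorff_measure_def using assms by (auto intro: SUP_least)


lemma alpha_q_pos: "q \<ge> 0 \<Longrightarrow> alpha_q q > 0"
  unfolding alpha_q_def by (intro divide_pos_pos) (auto intro!: Gamma_real_pos)

lemma ediam_empty[simp]: "ediam {} = 0"
  by (simp add: ediam_def)

lemma hcontrib_mono:
  assumes "q \<ge> 0" "A \<subseteq> B"
  shows "hcontrib q A \<le> hcontrib q B"
proof -
  consider "A = {}" | "A \<noteq> {}" "q = 0" | "A \<noteq> {}" "q \<noteq> 0" "\<not> bounded B"
    | "A \<noteq> {}" "q \<noteq> 0" "bounded B" by blast
  then show ?thesis
  proof cases
    case 4
    then have "bounded A" "B \<noteq> {}" using assms bounded_subset by auto
    moreover have "diameter A \<le> diameter B" using 4 assms by (intro diameter_subset) auto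
    moreover have "diameter A \<ge> 0" by (simp add: diameter_ge_0 \<open>bounded A\<close>)
    ultimately show ?thesis using 4 assms alpha_q_pos[of q]
      by (auto simp: hcontrib_def intro!: ennreal_leI mult_left_mono powr_mono2)
  qed (use assms in \<open>auto simp: hcontrib_def\<close>)
qed

lemma hcontrib_le:
  assumes "q > 0" "A \<noteq> {}" "\<And>x y. x \<in> A \<Longrightarrow> y \<in> A \<Longrightarrow> dist x y \<le> d"
  shows "hcontrib q (A::'a::real_normed_vector set) \<le> ennreal (alpha_q q * (d/2) powr q)"
proof -
  have b: "bounded A" using assms unfolding bounded_def by blast
  have "diameter A \<le> d" using assms by (intro diameter_le) (auto simp: dist_norm)
  moreover have "diameter A \<ge> 0" by (simp add: diameter_ge_0 b)
  ultimately show ?thesis using assms b alpha_q_pos[of q]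
    by (auto simp: hcontrib_def intro!: ennreal_leI mult_left_mono powr_mono2)
qed

lemma ediam_le:
  assumes "\<And>x y. x \<in> A \<Longrightarrow> y \<in> A \<Longrightarrow> dist x y \<le> d" "d \<ge> 0"
  shows "ediam (A::'a::real_normed_vector set) \<le> ennreal d"
proof -
  have b: "bounded A"
  proof (cases "A = {}")
    case False
    then obtain a where "a \<in> A" by blast
    then show ?thesis using assms(1) unfolding bounded_def by blast
  qed simp
  have "diameter A \<le> d" using assms by (intro diameter_le) (auto simp: dist_norm)
  then show ?thesis using b by (auto simp: ediam_def intro!: ennreal_leI)
qed

lemma suminf_upper_ennreal: "(f::nat \<Rightarrow> ennreal) j \<le> suminf f"
proof -
  have "f j = sum f {j}" by simp
  also have "\<dots> \<le> suminf f" by (intro sum_le_suminf) auto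
  finally show ?thesis .
qed

lemma ennreal_less_real: 
  assumes "ennreal a < ennreal b" shows "a < b"
proof (rule ccontr)
  assume "\<not> a < b"
  then have "ennreal b \<le> ennreal a" by (intro ennreal_leI) simp
  with assms show False by simp
qed

lemma HA_empty[simp]: "HA \<delta> q ({}::'a::metric_space set) = 0"
proof -
  have "HA \<delta> q ({}::'a set) \<le> (\<Sum>j::nat. hcontrib q ({}::'a set))"
    by (rule HA_le_cover[of "{}" "\<lambda>_. {}"]) auto
  then show ?thesis by simp
qed

lemma Hc0_HM0:
  assumes q: "q > 0" and z: "HA \<infinity> q (X::'a::real_normed_vector set) = 0"
  shows "HM q X = 0"
proof -
  have "HA (ennreal \<delta>) q X \<le> 0" if d: "\<delta> > 0" for \<delta>
  proof (rule ennreal_le_epsilon)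
    fix e :: real assume e: "e > 0"
    define t where "t = alpha_q q * (\<delta>/2) powr q"
    have t: "t > 0" using d q alpha_q_pos[of q] by (simp add: t_def)
    define e' where "e' = min e t"
    have "e' > 0" using e t by (simp add: e'_def)
    then have "HA \<infinity> q X < ennreal e'" using z by simp
    from HA_close[OF this] obtain C where C: "X \<subseteq> (\<Union>j. C j)" "(\<Sum>j. hcontrib q (C j)) < ennreal e'"
      by blast
    have "ediam (C j) \<le> ennreal \<delta>" for j
    proof (cases "C j = {}")
      case False
      have "hcontrib q (C j) < ennreal e'" using suminf_upper_ennreal[of _ j] C(2) by (rule le_less_trans)
      then have bd: "bounded (C j)" and lt: "alpha_q q * (diameter (C j) / 2) powr q < e'"
        using False q by (auto simp: hcontrib_def split: if_splits dest!: ennreal_less_real)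
      have "diameter (C j) \<le> \<delta>"
      proof (rule ccontr)
        assume "\<not> ?thesis"
        then have "(\<delta>/2) powr q \<le> (diameter (C j) / 2) powr q" using d q by (intro powr_mono2) auto
        then have "t \<le> alpha_q q * (diameter (C j) / 2) powr q"
          unfolding t_def using alpha_q_pos[of q] q by (intro mult_left_mono) auto
        then show False using lt by (simp add: e'_def)
      qed
      then show ?thesis using bd by (simp add: ediam_def ennreal_leI)
    qed simp
    then have "HA (ennreal \<delta>) q X \<le> (\<Sum>j. hcontrib q (C j))" by (intro HA_le_cover[OF C(1)])
    also have "\<dots> \<le> ennreal e'" using C(2) by simp
    also have "\<dots> \<le> ennreal e" by (intro ennreal_leI) (simp add: e'_def)
    finally show "HA (ennreal \<delta>) q X \<le> 0 + ennreal e" by simp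
  qed
  then show ?thesis by (intro antisym HM_le_HA_bound) auto
qed

lemma HA_finite_union:
  assumes "finite K"
  shows "HA \<delta> q (\<Union>k\<in>K. X k) \<le> (\<Sum>k\<in>K. HA \<delta> q (X k))"
  using assms
proof (induction K rule: finite_induct)
  case empty
  then show ?case by simp
next
  case (insert k K)
  define A where "A = (\<lambda>i::nat. if i = 0 then X k else if i = 1 then (\<Union>k\<in>K. X k) else {})"
  have "A i \<subseteq> A 0 \<union> A 1" for i by (cases "i = 0"; cases "i = 1") (auto simp: A_def)
  then have "(\<Union>i. A i) = A 0 \<union> A 1" by blast
  then have "(\<Union>k\<in>insert k K. X k) = (\<Union>i. A i)" by (simp add: A_def)
  then have "HA \<delta> q (\<Union>k\<in>insert k K. X k) \<le> (\<Sum>i. HA \<delta> q (A i))" using HA_subadd[of \<delta> q A] by simp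
  also have "(\<Sum>i. HA \<delta> q (A i)) = (\<Sum>i\<in>{0,1}. HA \<delta> q (A i))"
  proof (rule suminf_finite)
    show "HA \<delta> q (A n) = 0" if "n \<notin> {0,1}" for n
      using that by (simp add: A_def)
  qed simp
  also have "\<dots> = HA \<delta> q (X k) + HA \<delta> q (\<Union>k\<in>K. X k)" by (simp add: A_def)
  also have "\<dots> \<le> HA \<delta> q (X k) + (\<Sum>k\<in>K. HA \<delta> q (X k))" using insert by (intro add_left_mono) auto
  finally show ?case using insert by simp
qed


lemma mult_INF_ge_ennreal:
  fixes c x :: ennreal
  assumes "0 < c" "c < top" "\<And>i. i \<in> I \<Longrightarrow> x \<le> c * f i"
  shows "x \<le> c * (INF i\<in>I. f i)"
proof -
  have c0: "c \<noteq> 0" using assms by simp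
  have "x / c \<le> (INF i\<in>I. f i)" using assms by (intro INF_greatest divide_le_posI_ennreal) auto
  then have "x / c * c \<le> (INF i\<in>I. f i) * c" by (rule mult_right_mono) simp
  moreover have "x / c * c = x" using assms c0 by (simp add: ennreal_divide_times)
  ultimately show ?thesis by (simp add: mult.commute)
qed

definition cellidx :: "real \<Rightarrow> real^'m \<Rightarrow> ('m \<Rightarrow> int)" where
  "cellidx s v = (\<lambda>i. \<lfloor>v$i / s\<rfloor>)"

lemma grid_count:
  fixes y :: "real^'m"
  assumes r: "r > 0" and s: "s > 0"
  obtains K where "finite K" "real (card K) \<le> (2*r/s + 2) ^ CARD('m)"
    "\<And>v. v \<in> ball y r \<Longrightarrow> cellidx s v \<in> K"
proof -
  define lo where "lo = (\<lambda>i. \<lfloor>(y$i - r)/s\<rfloor>)"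
  define hi where "hi = (\<lambda>i. \<lfloor>(y$i + r)/s\<rfloor>)"
  define K where "K = PiE UNIV (\<lambda>i. {lo i .. hi i})"
  have fin: "finite K" unfolding K_def by (intro finite_PiE) auto
  have "real (card K) = (\<Prod>i\<in>UNIV. real (card {lo i .. hi i}))"
    unfolding K_def by (simp add: card_PiE)
  also have "\<dots> \<le> (\<Prod>i\<in>(UNIV::'m set). 2*r/s + 2)"
  proof (rule prod_mono)
    fix i :: 'm
    have "real_of_int (hi i) \<le> (y$i + r)/s" unfolding hi_def by (rule of_int_floor_le)
    moreover have "(y$i - r)/s < real_of_int (lo i) + 1" unfolding lo_def by (rule real_of_int_floor_add_one_gt)
    moreover have "(y$i + r)/s - (y$i - r)/s = 2*r/s" using s by (simp add: field_simps)
    moreover have "lo i \<le> hi i" unfolding lo_def hi_def using r s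
      by (intro floor_mono divide_right_mono) auto
    ultimately show "0 \<le> real (card {lo i .. hi i}) \<and> real (card {lo i .. hi i}) \<le> 2*r/s + 2"
      by simp
  qed
  also have "\<dots> = (2*r/s + 2) ^ CARD('m)" by simp
  finally have c: "real (card K) \<le> (2*r/s + 2) ^ CARD('m)" .
  have "cellidx s v \<in> K" if v: "v \<in> ball y r" for v
  proof -
    have "\<bar>(y - v)$i\<bar> \<le> norm (y - v)" for i by (rule component_le_norm_cart)
    moreover have "norm (y - v) < r" using v by (simp add: dist_norm)
    ultimately have b: "\<bar>y$i - v$i\<bar> < r" for i by (metis vector_minus_component le_less_trans)
    have "lo i \<le> \<lfloor>v$i / s\<rfloor> \<and> \<lfloor>v$i / s\<rfloor> \<le> hi i" for i
    proof -
      have "y$i - r \<le> v$i" "v$i \<le> y$i + r" using b[of i] by auto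
      then show ?thesis unfolding lo_def hi_def using s
        by (auto intro!: floor_mono divide_right_mono)
    qed
    then show ?thesis unfolding K_def cellidx_def by auto
  qed
  then show ?thesis using that fin c by blast
qed

lemma floor_eq_close:
  assumes "\<lfloor>a::real\<rfloor> = \<lfloor>b\<rfloor>" shows "\<bar>a - b\<bar> < 1"
proof -
  have "of_int \<lfloor>b\<rfloor> \<le> a" "a < of_int \<lfloor>b\<rfloor> + 1"
    using of_int_floor_le[of a] real_of_int_floor_add_one_gt[of a] assms by auto
  moreover have "of_int \<lfloor>b\<rfloor> \<le> b" "b < of_int \<lfloor>b\<rfloor> + 1"
    by (auto simp: of_int_floor_le real_of_int_floor_add_one_gt)
  ultimately show ?thesis unfolding abs_less_iff by linarith
qed

lemma cell_dist:
  fixes v w :: "real^'m"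
  assumes "cellidx s v = cellidx s w" "s > 0"
  shows "dist v w \<le> real CARD('m) * s"
proof -
  have "\<bar>v$i - w$i\<bar> \<le> s" for i
  proof -
    have "\<lfloor>v$i / s\<rfloor> = \<lfloor>w$i / s\<rfloor>" using assms(1) unfolding cellidx_def by meson
    then have "\<bar>v$i / s - w$i / s\<bar> < 1" by (rule floor_eq_close)
    then have "\<bar>(v$i - w$i) / s\<bar> < 1" by (simp add: diff_divide_distrib)
    then show ?thesis using assms(2) by (simp add: abs_divide)
  qed
  have "dist v w = norm (v - w)" by (simp add: dist_norm)
  also have "\<dots> \<le> (\<Sum>i\<in>UNIV. \<bar>(v - w)$i\<bar>)" by (rule norm_le_l1_cart)
  also have "\<dots> \<le> of_nat (card (UNIV::'m set)) * s"
    by (rule sum_bounded_above) (use \<open>\<And>i. \<bar>v$i - w$i\<bar> \<le> s\<close> in simp)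
  finally show ?thesis by simp
qed


lemma dist_pair_le: "dist (a, v) (b, w) \<le> dist a b + dist v w"
  by (simp add: dist_Pair_Pair sqrt_sum_squares_le_sum)

lemma grid_prod_bound:
  fixes A :: "(real^'n) set" and y :: "real^'m"
  assumes A: "\<And>a b. a \<in> A \<Longrightarrow> b \<in> A \<Longrightarrow> dist a b \<le> d" and d: "d \<ge> 0" and r: "r > 0" and s: "s > 0"
  shows "HA \<infinity> (real CARD('n)) (A \<times> ball y r) \<le>
    ennreal ((2*r/s + 2) ^ CARD('m) * (alpha_q (real CARD('n)) * ((d + real CARD('m) * s)/2) ^ CARD('n)))"
proof -
  obtain K where K: "finite K" "real (card K) \<le> (2*r/s + 2) ^ CARD('m)"
    "\<And>v. v \<in> ball y r \<Longrightarrow> cellidx s v \<in> K"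
    by (rule grid_count[OF r s, of y]) blast
  define X where "X = (\<lambda>k::'m \<Rightarrow> int. A \<times> {v::real^'m. cellidx s v = k})"
  define B where "B = alpha_q (real CARD('n)) * ((d + real CARD('m) * s)/2) ^ CARD('n)"
  have pos: "d + real CARD('m) * s > 0" using d s by (simp add: add_nonneg_pos)
  have B0: "B \<ge> 0" unfolding B_def using alpha_q_pos[of "real CARD('n)"] pos by simp
  have sub: "A \<times> ball y r \<subseteq> (\<Union>k\<in>K. X k)" using K(3) by (auto simp: X_def)
  have each: "HA \<infinity> (real CARD('n)) (X k) \<le> ennreal B" for k
  proof -
    have "HA \<infinity> (real CARD('n)) (X k) \<le> hcontrib (real CARD('n)) (X k)" by (rule HA_single) auto
    also have "\<dots> \<le> ennreal B"
    proof (cases "X k = {}")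
      case False
      have "hcontrib (real CARD('n)) (X k) \<le> ennreal (alpha_q (real CARD('n)) * ((d + real CARD('m) * s)/2) powr real CARD('n))"
      proof (rule hcontrib_le)
        fix p p' assume "p \<in> X k" "p' \<in> X k"
        then obtain a v b w where p: "p = (a, v)" "p' = (b, w)" "a \<in> A" "b \<in> A"
          "cellidx s v = k" "cellidx s w = k" by (auto simp: X_def)
        have "dist p p' \<le> dist a b + dist v w" unfolding p by (rule dist_pair_le)
        also have "\<dots> \<le> d + real CARD('m) * s"
          using A[OF p(3,4)] cell_dist[of s v w] p(5,6) s by (intro add_mono) auto
        finally show "dist p p' \<le> d + real CARD('m) * s" .
      qed (use False in auto)
      also have "\<dots> = ennreal B" unfolding B_def using pos by (simp add: powr_realpow)
      finally show ?thesis .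
    qed simp
    finally show ?thesis .
  qed
  have "HA \<infinity> (real CARD('n)) (A \<times> ball y r) \<le> HA \<infinity> (real CARD('n)) (\<Union>k\<in>K. X k)"
    by (rule HA_mono[OF sub])
  also have "\<dots> \<le> (\<Sum>k\<in>K. HA \<infinity> (real CARD('n)) (X k))" by (rule HA_finite_union[OF K(1)])
  also have "\<dots> \<le> (\<Sum>k\<in>K. ennreal B)" by (intro sum_mono each)
  also have "\<dots> = ennreal (real (card K) * B)" using B0 by (simp add: ennreal_mult ennreal_of_nat_eq_real_of_nat)
  also have "\<dots> \<le> ennreal ((2*r/s + 2) ^ CARD('m) * B)"
    using K(2) B0 by (intro ennreal_leI mult_right_mono) auto
  finally show ?thesis unfolding B_def .
qed


definition prodC :: "nat \<Rightarrow> nat \<Rightarrow> real" where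
  "prodC N M = alpha_q (real N) * (2 * real M + 4) ^ M * 2 ^ N / alpha_q (real N - real M)"

lemma prodC_pos: "M \<le> N \<Longrightarrow> prodC N M > 0"
  unfolding prodC_def using alpha_q_pos[of "real N"] alpha_q_pos[of "real N - real M"]
  by (intro divide_pos_pos mult_pos_pos) auto

lemma Hc0_ge1:
  assumes "P \<noteq> {}" shows "1 \<le> HA \<delta> 0 P"
  unfolding hausdorff_approx_def
proof (rule INF_greatest)
  fix C :: "nat \<Rightarrow> 'a set" assume "C \<in> {C. P \<subseteq> (\<Union>j. C j) \<and> (\<forall>j. ediam (C j) \<le> \<delta>)}"
  then obtain j where "C j \<noteq> {}" using assms by blast
  then have "hcontrib 0 (C j) = 1" by (simp add: hcontrib_def)
  then show "1 \<le> (\<Sum>j. hcontrib 0 (C j))" using suminf_upper_ennreal[of "\<lambda>j. hcontrib 0 (C j)" j] by simp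
qed

lemma piece_bound_pos:
  fixes A :: "(real^'n) set" and y :: "real^'m"
  assumes dab: "\<And>a b. a \<in> A \<Longrightarrow> b \<in> A \<Longrightarrow> dist a b \<le> d" and d: "0 < d" "d \<le> 2 * r"
    and r: "r > 0" and MN: "CARD('m) < CARD('n)"
  shows "HA \<infinity> (real CARD('n)) (A \<times> ball y r) \<le>
    ennreal (prodC CARD('n) CARD('m) * r ^ CARD('m) * (alpha_q (real CARD('n) - real CARD('m)) * (d/2) powr (real CARD('n) - real CARD('m))))"
proof -
  define N where "N = CARD('n)"
  define M where "M = CARD('m)"
  define q where "q = real N - real M"
  have M1: "M \<ge> 1" unfolding M_def by (simp add: Suc_le_eq)
  have MN': "M < N" using MN by (simp add: M_def N_def)
  define s where "s = d / real M"
  have s: "s > 0" using d M1 by (simp add: s_def)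
  have "HA \<infinity> (real CARD('n)) (A \<times> ball y r) \<le>
    ennreal ((2*r/s + 2) ^ M * (alpha_q (real N) * ((d + real M * s)/2) ^ N))"
    using grid_prod_bound[OF dab _ r s, where y=y] d unfolding M_def N_def by simp
  also have "(d + real M * s)/2 = d" using M1 by (simp add: s_def)
  also have "2*r/s + 2 = 2 * real M * r / d + 2" using M1 d by (simp add: s_def field_simps)
  also have "(2 * real M * r / d + 2) ^ M * (alpha_q (real N) * d ^ N) \<le>
      prodC N M * r ^ M * (alpha_q q * (d/2) powr q)"
  proof -
    have aN: "alpha_q (real N) > 0" by (rule alpha_q_pos) simp
    have aq: "alpha_q q > 0" using MN' by (intro alpha_q_pos) (simp add: q_def)
    have "2 * real M * r / d + 2 \<le> (2 * real M + 4) * r / d"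
    proof -
      have "2 \<le> 4 * r / d" using d by (simp add: field_simps)
      then show ?thesis by (simp add: field_simps add_divide_distrib)
    qed
    then have "(2 * real M * r / d + 2) ^ M \<le> ((2 * real M + 4) * r / d) ^ M"
      using d r by (intro power_mono) auto
    then have e1: "(2 * real M * r / d + 2) ^ M * (alpha_q (real N) * d ^ N) \<le>
       ((2 * real M + 4) * r / d) ^ M * (alpha_q (real N) * d ^ N)"
      using aN d by (intro mult_right_mono) auto
    have dN: "d ^ N = d ^ M * d ^ (N - M)" using MN' by (simp flip: power_add)
    have e2: "((2 * real M + 4) * r / d) ^ M * (alpha_q (real N) * d ^ N)
        = alpha_q (real N) * (2 * real M + 4) ^ M * r ^ M * d ^ (N - M)"
    proof -
      have "((2 * real M + 4) * r / d) ^ M = (2 * real M + 4) ^ M * r ^ M / d ^ M"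
        by (simp only: power_divide power_mult_distrib)
      then show ?thesis using d unfolding dN by (simp add: field_simps)
    qed
    have e3: "d ^ (N - M) = 2 powr q * (d/2) powr q"
    proof -
      have "q = real (N - M)" using MN' by (simp add: q_def of_nat_diff)
      then have "d ^ (N - M) = d powr q" using d by (simp add: powr_realpow)
      also have "d powr q = 2 powr q * (d/2) powr q" using d by (simp add: powr_divide)
      finally show ?thesis .
    qed
    have "2 powr q \<le> 2 ^ N"
    proof -
      have "2 powr q \<le> 2 powr (real N)" by (intro powr_mono) (auto simp: q_def)
      then show ?thesis by (simp add: powr_realpow)
    qed
    then have e4: "alpha_q (real N) * (2 * real M + 4) ^ M * r ^ M * (2 powr q * (d/2) powr q)
        \<le> alpha_q (real N) * (2 * real M + 4) ^ M * r ^ M * (2 ^ N * (d/2) powr q)"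
      using aN r by (intro mult_left_mono mult_right_mono) auto
    have e5: "alpha_q (real N) * (2 * real M + 4) ^ M * r ^ M * (2 ^ N * (d/2) powr q)
        = prodC N M * r ^ M * (alpha_q q * (d/2) powr q)"
      unfolding prodC_def q_def using aq q_def by (simp add: field_simps)
    have "(2 * real M * r / d + 2) ^ M * (alpha_q (real N) * d ^ N) \<le>
       alpha_q (real N) * (2 * real M + 4) ^ M * r ^ M * d ^ (N - M)" using e1 e2 by simp
    also have "\<dots> = alpha_q (real N) * (2 * real M + 4) ^ M * r ^ M * (2 powr q * (d/2) powr q)"
      using e3 by simp
    also note e4
    also note e5
    finally show ?thesis .
  qed
  then have "ennreal ((2 * real M * r / d + 2) ^ M * (alpha_q (real N) * d ^ N)) \<le>
      ennreal (prodC N M * r ^ M * (alpha_q q * (d/2) powr q))" by (rule ennreal_leI)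
  finally show ?thesis unfolding N_def M_def q_def .
qed


lemma piece_zero:
  fixes A :: "(real^'n) set" and y :: "real^'m"
  assumes dab: "\<And>a b. a \<in> A \<Longrightarrow> b \<in> A \<Longrightarrow> dist a b \<le> 0" and r: "r > 0"
    and MN: "CARD('m) < CARD('n)"
  shows "HA \<infinity> (real CARD('n)) (A \<times> ball y r) = 0"
proof -
  define N where "N = CARD('n)"
  define M where "M = CARD('m)"
  have M1: "M \<ge> 1" unfolding M_def by (simp add: Suc_le_eq)
  have MN': "M < N" using MN by (simp add: M_def N_def)
  have aN: "alpha_q (real N) > 0" by (rule alpha_q_pos) simp
  define K0 where "K0 = alpha_q (real N) * (4*r)^M * (real M)^N + 1"
  have K0: "K0 > 0" unfolding K0_def using aN r by (intro add_nonneg_pos) auto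
  have "HA \<infinity> (real CARD('n)) (A \<times> ball y r) \<le> 0 + ennreal e" if e: "e > 0" for e
  proof -
    define s where "s = min r (min 1 (e / K0))"
    have s: "0 < s" "s \<le> r" "s \<le> 1" "s \<le> e / K0" using r e K0 by (auto simp: s_def)
    have "HA \<infinity> (real CARD('n)) (A \<times> ball y r) \<le>
      ennreal ((2*r/s + 2) ^ M * (alpha_q (real N) * ((0 + real M * s)/2) ^ N))"
      using grid_prod_bound[OF dab _ r s(1), where y=y] unfolding M_def N_def by simp
    also have "(2*r/s + 2) ^ M * (alpha_q (real N) * ((0 + real M * s)/2) ^ N) \<le> e"
    proof -
      have "2*r/s + 2 \<le> 4*r/s"
      proof -
        have "2 \<le> 2*r/s" using s by (simp add: field_simps)
        moreover have "4*r/s = 2*r/s + 2*r/s" by (simp add: add_divide_distrib[symmetric])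
        ultimately show ?thesis by linarith
      qed
      then have p1: "(2*r/s + 2) ^ M \<le> (4*r/s) ^ M" using s r by (intro power_mono) auto
      have p2: "((0 + real M * s)/2) ^ N \<le> (real M * s) ^ N" using s by (intro power_mono) auto
      have "(2*r/s + 2) ^ M * (alpha_q (real N) * ((0 + real M * s)/2) ^ N) \<le>
          (4*r/s) ^ M * (alpha_q (real N) * (real M * s) ^ N)"
        using p1 p2 aN s r by (intro mult_mono mult_left_mono) auto
      also have "\<dots> = alpha_q (real N) * (4*r)^M * (real M)^N * s ^ (N - M)"
      proof -
        have sN: "s ^ N = s ^ M * s ^ (N - M)" using MN' by (simp flip: power_add)
        have "(4*r/s) ^ M = (4*r)^M / s ^ M" by (simp only: power_divide)
        then show ?thesis using s unfolding power_mult_distrib sN by (simp add: field_simps)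
      qed
      also have "\<dots> \<le> alpha_q (real N) * (4*r)^M * (real M)^N * s"
      proof -
        have "s ^ (N - M) \<le> s ^ 1" using s MN' by (intro power_decreasing) auto
        then show ?thesis using aN r by (intro mult_left_mono) auto
      qed
      also have "\<dots> \<le> K0 * s" unfolding K0_def using s by (simp add: distrib_right)
      also have "\<dots> \<le> e" using s K0 by (simp add: field_simps)
      finally show ?thesis .
    qed
    then have "ennreal ((2*r/s + 2) ^ M * (alpha_q (real N) * ((0 + real M * s)/2) ^ N)) \<le> ennreal e"
      by (rule ennreal_leI)
    finally show ?thesis by simp
  qed
  then have "HA \<infinity> (real CARD('n)) (A \<times> ball y r) \<le> 0" by (rule ennreal_le_epsilon)
  then show ?thesis by simp
qed


lemma piece_bound:
  fixes A :: "(real^'n) set" and x :: "real^'n" and y :: "real^'m"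
  assumes A: "A \<subseteq> ball x r" and r: "r > 0" and MN: "CARD('m) < CARD('n)"
  shows "HA \<infinity> (real CARD('n)) (A \<times> ball y r) \<le>
    ennreal (prodC CARD('n) CARD('m) * r ^ CARD('m)) * hcontrib (real CARD('n) - real CARD('m)) A"
proof (cases "A = {}")
  case True then show ?thesis by simp
next
  case False
  have bA: "bounded A" using A bounded_ball bounded_subset by blast
  define d where "d = diameter A"
  have dab: "\<And>a b. a \<in> A \<Longrightarrow> b \<in> A \<Longrightarrow> dist a b \<le> d"
    unfolding d_def using diameter_bounded_bound[OF bA] by blast
  have d0: "d \<ge> 0" unfolding d_def using diameter_ge_0[OF bA] .
  have d2: "d \<le> 2 * r" unfolding d_def
  proof (rule diameter_le)
    fix a b assume "a \<in> A" "b \<in> A"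
    then have "dist x a < r" "dist x b < r" using A by auto
    then have "dist a b < 2 * r" using dist_triangle[of a b x] by (simp add: dist_commute)
    then show "norm (a - b) \<le> 2 * r" by (simp add: dist_norm)
  qed (use False in auto)
  have q: "real CARD('n) - real CARD('m) \<noteq> 0" using MN by simp
  have hc: "hcontrib (real CARD('n) - real CARD('m)) A =
      ennreal (alpha_q (real CARD('n) - real CARD('m)) * (d/2) powr (real CARD('n) - real CARD('m)))"
    using False bA q unfolding hcontrib_def d_def by simp
  show ?thesis
  proof (cases "d = 0")
    case True
    then have "HA \<infinity> (real CARD('n)) (A \<times> ball y r) = 0"
      using dab by (intro piece_zero r MN) auto
    then show ?thesis by simp
  next
    case False
    then have "d > 0" using d0 by simp
    have "HA \<infinity> (real CARD('n)) (A \<times> ball y r) \<le>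
      ennreal (prodC CARD('n) CARD('m) * r ^ CARD('m) * (alpha_q (real CARD('n) - real CARD('m)) * (d/2) powr (real CARD('n) - real CARD('m))))"
      by (rule piece_bound_pos[OF dab \<open>d > 0\<close> d2 r MN])
    also have "\<dots> = ennreal (prodC CARD('n) CARD('m) * r ^ CARD('m)) * hcontrib (real CARD('n) - real CARD('m)) A"
      unfolding hc using prodC_pos[of "CARD('m)" "CARD('n)"] MN r
        alpha_q_pos[of "real CARD('n) - real CARD('m)"]
      by (subst ennreal_mult) auto
    finally show ?thesis .
  qed
qed

lemma product_est:
  fixes T :: "((real^'n) \<times> (real^'m)) set"
  assumes T: "T \<subseteq> ball z r" and r: "r > 0" and MN: "CARD('m) \<le> CARD('n)"
  shows "HA \<infinity> (real CARD('n)) T \<le>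
    ennreal (prodC CARD('n) CARD('m) * r ^ CARD('m)) * HA \<infinity> (real CARD('n) - real CARD('m)) (fst ` T)"
proof (cases "CARD('m) = CARD('n)")
  case True
  show ?thesis
  proof (cases "T = {}")
    case True then show ?thesis by simp
  next
    case False
    have "HA \<infinity> (real CARD('n)) T \<le> hcontrib (real CARD('n)) T" by (rule HA_single) auto
    also have "\<dots> \<le> ennreal (alpha_q (real CARD('n)) * ((2*r)/2) powr real CARD('n))"
    proof (rule hcontrib_le)
      fix a b assume "a \<in> T" "b \<in> T"
      then have "dist z a < r" "dist z b < r" using T by auto
      then show "dist a b \<le> 2 * r" using dist_triangle[of a b z] by (simp add: dist_commute)
    qed (use False in auto)
    also have "\<dots> = ennreal (alpha_q (real CARD('n)) * r ^ CARD('n))" using r by (simp add: powr_realpow)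
    also have "\<dots> \<le> ennreal (prodC CARD('n) CARD('m) * r ^ CARD('m))"
    proof (rule ennreal_leI)
      have a0: "alpha_q 0 = 1" by (simp add: alpha_q_def)
      have "alpha_q (real CARD('n)) * 1 \<le> alpha_q (real CARD('n)) * ((2 * real CARD('n) + 4) ^ CARD('n) * 2 ^ CARD('n))"
      proof (rule mult_left_mono)
        have "1 \<le> (2 * real CARD('n) + 4) ^ CARD('n)" by (rule one_le_power) simp
        moreover have "(1::real) \<le> 2 ^ CARD('n)" by (rule one_le_power) simp
        ultimately show "1 \<le> (2 * real CARD('n) + 4) ^ CARD('n) * 2 ^ CARD('n)"
          using mult_mono[of 1 _ 1] by fastforce
      qed (use alpha_q_pos[of "real CARD('n)"] in simp)
      then have "alpha_q (real CARD('n)) \<le> prodC CARD('n) CARD('m)"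
        unfolding prodC_def using True a0 by (simp add: mult.assoc)
      then show "alpha_q (real CARD('n)) * r ^ CARD('n) \<le> prodC CARD('n) CARD('m) * r ^ CARD('m)"
        using r unfolding True by (intro mult_right_mono) auto
    qed
    also have "\<dots> = ennreal (prodC CARD('n) CARD('m) * r ^ CARD('m)) * 1" by simp
    also have "\<dots> \<le> ennreal (prodC CARD('n) CARD('m) * r ^ CARD('m)) * HA \<infinity> (real CARD('n) - real CARD('m)) (fst ` T)"
      using Hc0_ge1[of "fst ` T" \<infinity>] False True by (intro mult_left_mono) auto
    finally show ?thesis .
  qed
next
  case False
  then have MN': "CARD('m) < CARD('n)" using MN by simp
  define c where "c = ennreal (prodC CARD('n) CARD('m) * r ^ CARD('m))"
  define q where "q = real CARD('n) - real CARD('m)"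
  have c: "0 < c" "c < top" unfolding c_def using prodC_pos[OF MN] r by auto
  have "HA \<infinity> (real CARD('n)) T \<le> c * (\<Sum>j. hcontrib q (C j))"
    if C: "fst ` T \<subseteq> (\<Union>j. C j)" for C
  proof -
    define Y where "Y = (\<lambda>j. (C j \<inter> fst ` T) \<times> ball (snd z) r)"
    have "T \<subseteq> (\<Union>j. Y j)"
    proof
      fix t assume t: "t \<in> T"
      then obtain j where "fst t \<in> C j" using C by blast
      moreover have "dist (snd z) (snd t) < r" using t T dist_snd_le[of z t] by fastforce
      ultimately show "t \<in> (\<Union>j. Y j)" using t unfolding Y_def
        by (intro UN_I[of j]) (auto intro!: mem_Times_iff[THEN iffD2])
    qed
    then have "HA \<infinity> (real CARD('n)) T \<le> HA \<infinity> (real CARD('n)) (\<Union>j. Y j)" by (rule HA_mono)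
    also have "\<dots> \<le> (\<Sum>j. HA \<infinity> (real CARD('n)) (Y j))" by (rule HA_subadd)
    also have "\<dots> \<le> (\<Sum>j. c * hcontrib q (C j))"
    proof (intro suminf_le allI)
      fix j
      have sub: "C j \<inter> fst ` T \<subseteq> ball (fst z) r"
      proof
        fix a assume "a \<in> C j \<inter> fst ` T"
        then obtain t where "t \<in> T" "a = fst t" by auto
        then show "a \<in> ball (fst z) r" using T dist_fst_le[of z t] by auto
      qed
      have "HA \<infinity> (real CARD('n)) (Y j) \<le> c * hcontrib q (C j \<inter> fst ` T)"
        unfolding Y_def c_def q_def by (rule piece_bound[OF sub r MN'])
      also have "\<dots> \<le> c * hcontrib q (C j)" using MN
        by (intro mult_left_mono hcontrib_mono) (auto simp: q_def)
      finally show "HA \<infinity> (real CARD('n)) (Y j) \<le> c * hcontrib q (C j)" .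
    qed auto
    also have "\<dots> = c * (\<Sum>j. hcontrib q (C j))" by (rule ennreal_suminf_cmult)
    finally show ?thesis .
  qed
  then have "HA \<infinity> (real CARD('n)) T \<le> c * HA \<infinity> q (fst ` T)"
    unfolding hausdorff_approx_def[of _ q] by (intro mult_INF_ge_ennreal c) auto
  then show ?thesis unfolding c_def q_def .
qed


definition cbad :: "real \<Rightarrow> real" where "cbad q = alpha_q q / (2 * 4 powr q)"

lemma bad_piece:
  fixes A S :: "'a::real_normed_vector set"
  assumes q: "q > 0" and AS: "A \<subseteq> S" and dab: "\<And>a b. a \<in> A \<Longrightarrow> b \<in> A \<Longrightarrow> dist a b \<le> \<rho>"
    and \<rho>: "\<rho> \<ge> 0" "2 * \<rho> < r0"
    and bad: "\<And>z r. z \<in> A \<Longrightarrow> 0 < r \<Longrightarrow> r < r0 \<Longrightarrow> HA \<infinity> q (S \<inter> ball z r) \<le> ennreal (cbad q * r powr q)"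
  shows "HA \<infinity> q A = 0"
proof (cases "A = {}")
  case True then show ?thesis by simp
next
  case False
  have aq: "alpha_q q > 0" using q by (intro alpha_q_pos) simp
  have fin: "HA \<infinity> q A < top"
  proof -
    have "HA \<infinity> q A \<le> hcontrib q A" by (rule HA_single) auto
    also have "\<dots> \<le> ennreal (alpha_q q * (\<rho>/2) powr q)" by (rule hcontrib_le[OF q False dab])
    finally show ?thesis using le_less_trans by fastforce
  qed
  have key: "HA \<infinity> q D \<le> ennreal (1/2) * hcontrib q D" if D: "D \<subseteq> A" for D
  proof (cases "D = {}")
    case True then show ?thesis by simp
  next
    case False
    have bD: "bounded D" using D dab unfolding bounded_def
      by (metis False ex_in_conv subsetD)
    define \<delta> where "\<delta> = diameter D"
    have hc: "hcontrib q D = ennreal (alpha_q q * (\<delta>/2) powr q)"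
      using False bD q unfolding hcontrib_def \<delta>_def by simp
    have d0: "\<delta> \<ge> 0" unfolding \<delta>_def by (rule diameter_ge_0[OF bD])
    have ddist: "\<And>a b. a \<in> D \<Longrightarrow> b \<in> D \<Longrightarrow> dist a b \<le> \<delta>"
      unfolding \<delta>_def using diameter_bounded_bound[OF bD] by blast
    have d\<rho>: "\<delta> \<le> \<rho>" unfolding \<delta>_def
      using D dab False by (intro diameter_le) (auto simp: dist_norm)
    show ?thesis
    proof (cases "\<delta> = 0")
      case True
      have "HA \<infinity> q D \<le> hcontrib q D" by (rule HA_single) auto
      also have "hcontrib q D = 0" using hc True q by simp
      finally show ?thesis by simp
    next
      case False
      then have dpos: "\<delta> > 0" using d0 by simp
      obtain z where z: "z \<in> D" using \<open>D \<noteq> {}\<close> by blast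
      have "D \<subseteq> S \<inter> ball z (2 * \<delta>)"
      proof
        fix x assume "x \<in> D"
        then have "dist z x \<le> \<delta>" using ddist z by blast
        then show "x \<in> S \<inter> ball z (2 * \<delta>)" using \<open>x \<in> D\<close> D AS dpos by auto
      qed
      then have "HA \<infinity> q D \<le> HA \<infinity> q (S \<inter> ball z (2 * \<delta>))" by (rule HA_mono)
      also have "\<dots> \<le> ennreal (cbad q * (2 * \<delta>) powr q)"
        using z D dpos d\<rho> \<rho> by (intro bad) auto
      also have "cbad q * (2 * \<delta>) powr q = 1/2 * (alpha_q q * (\<delta>/2) powr q)"
      proof -
        have "(2 * \<delta>) powr q = 4 powr q * (\<delta>/2) powr q"
          using dpos by (simp add: powr_mult[symmetric])
        then show ?thesis unfolding cbad_def by (simp add: field_simps)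
      qed
      also have "ennreal (1/2 * (alpha_q q * (\<delta>/2) powr q)) = ennreal (1/2) * hcontrib q D"
        unfolding hc by (rule ennreal_mult) (use aq in simp_all)
      finally show ?thesis .
    qed
  qed
  have "HA \<infinity> q A \<le> ennreal (1/2) * (\<Sum>j. hcontrib q (C j))" if C: "A \<subseteq> (\<Union>j. C j)" for C
  proof -
    have "A \<subseteq> (\<Union>j. C j \<inter> A)" using C by blast
    then have "HA \<infinity> q A \<le> HA \<infinity> q (\<Union>j. C j \<inter> A)" by (rule HA_mono)
    also have "\<dots> \<le> (\<Sum>j. HA \<infinity> q (C j \<inter> A))" by (rule HA_subadd)
    also have "\<dots> \<le> (\<Sum>j. ennreal (1/2) * hcontrib q (C j))"
    proof (intro suminf_le allI)
      fix j
      have "HA \<infinity> q (C j \<inter> A) \<le> ennreal (1/2) * hcontrib q (C j \<inter> A)" by (rule key) auto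
      also have "\<dots> \<le> ennreal (1/2) * hcontrib q (C j)" using q
        by (intro mult_left_mono hcontrib_mono) auto
      finally show "HA \<infinity> q (C j \<inter> A) \<le> ennreal (1/2) * hcontrib q (C j)" .
    qed auto
    also have "\<dots> = ennreal (1/2) * (\<Sum>j. hcontrib q (C j))" by (rule ennreal_suminf_cmult)
    finally show ?thesis .
  qed
  note cov = this
  have h2a: "0 < ennreal (1/2)" by (simp only: ennreal_less_zero_iff)
  have h2b: "ennreal (1/2) < top" by (rule ennreal_less_top)
  note h2 = h2a h2b
  have "HA \<infinity> q A \<le> ennreal (1/2) *
     (INF C \<in> {C. A \<subseteq> (\<Union>j. C j) \<and> (\<forall>j. ediam (C j) \<le> \<infinity>)}. (\<Sum>j. hcontrib q (C j)))"
    by (rule mult_INF_ge_ennreal[OF h2], rule cov) auto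
  then have half: "HA \<infinity> q A \<le> ennreal (1/2) * HA \<infinity> q A"
    unfolding hausdorff_approx_def[of _ q A] .
  obtain x where x: "HA \<infinity> q A = ennreal x" "x \<ge> 0" using fin by (cases "HA \<infinity> q A") auto
  have "ennreal x \<le> ennreal (1/2) * ennreal x" using half unfolding x(1) .
  also have "ennreal (1/2) * ennreal x = ennreal (1/2 * x)" by (rule ennreal_mult[symmetric]) (use x in auto)
  finally have "x \<le> 1/2 * x" using x by (subst (asm) ennreal_le_iff) auto
  then have "x = 0" using x by simp
  then show ?thesis using x by simp
qed


lemma bad_null:
  fixes S :: "'a::euclidean_space set"
  assumes q: "q > 0"
  shows "HM q {z\<in>S. \<exists>r0>0. \<forall>r. 0 < r \<and> r < r0 \<longrightarrow>
     HA \<infinity> q (S \<inter> ball z r) \<le> ennreal (cbad q * r powr q)} = 0"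
proof -
  define Bad where "Bad = {z\<in>S. \<exists>r0>0. \<forall>r. 0 < r \<and> r < r0 \<longrightarrow>
     HA \<infinity> q (S \<inter> ball z r) \<le> ennreal (cbad q * r powr q)}"
  obtain D :: "'a set" where D: "countable D" "\<And>X. open X \<Longrightarrow> X \<noteq> {} \<Longrightarrow> \<exists>d\<in>D. d \<in> X"
    using countable_dense_exists by blast
  define B where "B = (\<lambda>k::nat. {z\<in>S. \<forall>r. 0 < r \<and> r < 1 / real (Suc k) \<longrightarrow>
     HA \<infinity> q (S \<inter> ball z r) \<le> ennreal (cbad q * r powr q)})"
  have Bad_sub: "Bad \<subseteq> (\<Union>k. B k)"
  proof
    fix z assume "z \<in> Bad"
    then obtain r0 where r0: "r0 > 0" "z \<in> S" "\<And>r. 0 < r \<Longrightarrow> r < r0 \<Longrightarrow>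
      HA \<infinity> q (S \<inter> ball z r) \<le> ennreal (cbad q * r powr q)" unfolding Bad_def by blast
    obtain k where k: "inverse (real (Suc k)) < r0" using reals_Archimedean[OF r0(1)] by blast
    then have "z \<in> B k" using r0 unfolding B_def by (auto simp: inverse_eq_divide)
    then show "z \<in> (\<Union>k. B k)" by blast
  qed
  define \<rho> where "\<rho> = (\<lambda>k::nat. 1 / (8 * real (Suc k)))"
  have \<rho>pos: "\<rho> k > 0" for k unfolding \<rho>_def by simp
  define P where "P = (\<lambda>k i. B k \<inter> ball (from_nat_into D i) (\<rho> k))"
  have cov: "B k \<subseteq> (\<Union>i. P k i)" for k
  proof
    fix z assume z: "z \<in> B k"
    obtain d where d: "d \<in> D" "d \<in> ball z (\<rho> k)" using D(2)[of "ball z (\<rho> k)"] \<rho>pos[of k] by auto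
    obtain i where "from_nat_into D i = d" using from_nat_into_surj[OF D(1) d(1)] by blast
    then show "z \<in> (\<Union>i. P k i)" using z d unfolding P_def by (auto simp: dist_commute)
  qed
  have P0: "HA \<infinity> q (P k i) = 0" for k i
  proof (rule bad_piece[OF q])
    show "P k i \<subseteq> S" unfolding P_def B_def by auto
    show "dist a b \<le> 2 * \<rho> k" if "a \<in> P k i" "b \<in> P k i" for a b
    proof -
      have "dist (from_nat_into D i) a < \<rho> k" "dist (from_nat_into D i) b < \<rho> k"
        using that unfolding P_def by auto
      then show ?thesis using dist_triangle[of a b "from_nat_into D i"] by (simp add: dist_commute)
    qed
    show "0 \<le> 2 * \<rho> k" using \<rho>pos[of k] by simp
    show "2 * (2 * \<rho> k) < 1 / real (Suc k)" unfolding \<rho>_def by (simp add: field_simps)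
    show "HA \<infinity> q (S \<inter> ball z r) \<le> ennreal (cbad q * r powr q)"
      if "z \<in> P k i" "0 < r" "r < 1 / real (Suc k)" for z r
      using that unfolding P_def B_def by simp
  qed
  have "(\<Union>k. B k) \<subseteq> (\<Union>k. \<Union>i. P k i)" using cov by (intro UN_mono) auto
  then have "HA \<infinity> q Bad \<le> HA \<infinity> q (\<Union>k. \<Union>i. P k i)" using Bad_sub by (intro HA_mono) (rule order.trans)
  also have "\<dots> \<le> (\<Sum>k. HA \<infinity> q (\<Union>i. P k i))" by (rule HA_subadd)
  also have "\<dots> \<le> (\<Sum>k. \<Sum>i. HA \<infinity> q (P k i))" by (intro suminf_le allI HA_subadd) auto
  also have "\<dots> = 0" by (simp only: P0) simp
  finally have "HA \<infinity> q Bad = 0" by simp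
  then have "HM q Bad = 0" by (rule Hc0_HM0[OF q])
  then show ?thesis unfolding Bad_def .
qed


lemma enn2ereal_le_ereal: "enn2ereal x \<le> ereal t \<Longrightarrow> x \<le> ennreal t"
  using e2ennreal_mono[of "enn2ereal x" "ereal t"] by (simp add: e2ennreal_enn2ereal e2ennreal_ereal)

lemma ennreal_integral_le_nn:
  fixes h :: "'a \<Rightarrow> real"
  assumes h: "integrable M h"
  shows "ennreal (integral\<^sup>L M h) \<le> (\<integral>\<^sup>+ x. ennreal (h x) \<partial>M)"
proof -
  have "integral\<^sup>L M h \<le> integral\<^sup>L M (\<lambda>x. max (h x) 0)" using h by (intro integral_mono) auto
  also have "\<dots> = enn2real (\<integral>\<^sup>+ x. ennreal (max (h x) 0) \<partial>M)"
    using h by (intro integral_eq_nn_integral) auto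
  also have "(\<lambda>x. ennreal (max (h x) 0)) = (\<lambda>x. ennreal (h x))"
    by (auto simp: max_def ennreal_neg fun_eq_iff)
  finally have "ennreal (integral\<^sup>L M h) \<le> ennreal (enn2real (\<integral>\<^sup>+ x. ennreal (h x) \<partial>M))"
    by (rule ennreal_leI)
  also have "\<dots> \<le> (\<integral>\<^sup>+ x. ennreal (h x) \<partial>M)" by (simp add: ennreal_enn2real_if)
  finally show ?thesis .
qed

lemma HM_Un: "HM q (A \<union> B) \<le> HM q A + HM q B"
proof (rule HM_le_HA_bound)
  fix \<delta> :: real assume d: "\<delta> > 0"
  define X where "X = (\<lambda>k::nat. if k = 0 then A else B)"
  have "A \<union> B = (\<Union>k\<in>{0,1}. X k)" by (auto simp: X_def)
  then have "HA (ennreal \<delta>) q (A \<union> B) \<le> (\<Sum>k\<in>{0,1}. HA (ennreal \<delta>) q (X k))"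
    using HA_finite_union[of "{0::nat,1}" "ennreal \<delta>" q X] by simp
  also have "\<dots> = HA (ennreal \<delta>) q A + HA (ennreal \<delta>) q B" by (simp add: X_def)
  also have "\<dots> \<le> HM q A + HM q B" using d by (intro add_mono HA_le_HM)
  finally show "HA (ennreal \<delta>) q (A \<union> B) \<le> HM q A + HM q B" .
qed

lemma suminf_at_most_one:
  fixes h :: "nat \<Rightarrow> ennreal"
  assumes "\<And>n m. h n \<noteq> 0 \<Longrightarrow> h m \<noteq> 0 \<Longrightarrow> n = m" "\<And>n. h n \<le> b"
  shows "suminf h \<le> b"
proof (cases "\<exists>n. h n \<noteq> 0")
  case True
  then obtain n where n: "h n \<noteq> 0" by blast
  have "suminf h = sum h {n}" by (rule suminf_finite) (use assms(1) n in auto)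
  then show ?thesis using assms(2) by simp
next
  case False
  then have "h = (\<lambda>_. 0)" by auto
  then show ?thesis by simp
qed


definition mainC :: "nat \<Rightarrow> nat \<Rightarrow> real" where
  "mainC N M = alpha_q (real N) * 20 ^ N / cbad (real N) * prodC N M"

lemma cbad_pos: "q > 0 \<Longrightarrow> cbad q > 0"
  unfolding cbad_def using alpha_q_pos[of q] by simp

lemma mainC_pos: "M \<le> N \<Longrightarrow> 0 < N \<Longrightarrow> mainC N M > 0"
  unfolding mainC_def using alpha_q_pos[of "real N"] cbad_pos[of "real N"] prodC_pos[of M N]
  by simp

lemma indicator_ennreal: "ennreal (indicator A x * t) = indicator A x * ennreal t"
  by (auto simp: indicator_def)

lemma per_ball:
  fixes f :: "real^'n \<Rightarrow> real^'m" and \<theta> :: "real^'n \<Rightarrow> real"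
    and z :: "(real^'n) \<times> (real^'m)" and S :: "((real^'n) \<times> (real^'m)) set"
  assumes MN: "CARD('m) \<le> CARD('n)"
    and hyp: "enn2ereal (HA \<infinity> (real CARD('n) - real CARD('m)) (fst ` (range (\<lambda>x. (x, f x)) \<inter> ball z r)))
         \<le> ereal (r powr (- real CARD('m)) * (LINT x : fst ` (range (\<lambda>x. (x, f x)) \<inter> ball z (4 * r)) | lebesgue. \<theta> x))"
    and r: "r > 0"
    and SG: "S \<subseteq> range (\<lambda>x. (x, f x))"
    and big: "ennreal (cbad (real CARD('n)) * r powr real CARD('n)) < HA \<infinity> (real CARD('n)) (S \<inter> ball z r)"
  shows "set_integrable lebesgue (fst ` (range (\<lambda>x. (x, f x)) \<inter> ball z (4 * r))) \<theta>"
    and "hcontrib (real CARD('n)) (ball z (20 * r)) \<le> ennreal (mainC CARD('n) CARD('m)) *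
       (\<integral>\<^sup>+ x. indicator (fst ` (range (\<lambda>x. (x, f x)) \<inter> ball z (4 * r))) x * ennreal (\<theta> x) \<partial>lebesgue)"
proof -
  define G where "G = range (\<lambda>x. (x, f x))"
  define A where "A = fst ` (G \<inter> ball z (4 * r))"
  define L where "L = (LINT x : A | lebesgue. \<theta> x)"
  define N where "N = CARD('n)"
  define M where "M = CARD('m)"
  define c where "c = cbad (real N)"
  have N0: "N > 0" unfolding N_def by simp
  have c0: "c > 0" unfolding c_def using N0 by (intro cbad_pos) simp
  have P0: "prodC N M > 0" using MN unfolding N_def M_def by (intro prodC_pos)
  have Hq: "HA \<infinity> (real N - real M) (fst ` (G \<inter> ball z r)) \<le> ennreal (r powr (- real M) * L)"
    using enn2ereal_le_ereal[OF hyp] unfolding G_def A_def L_def N_def M_def .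
  have "HA \<infinity> (real N) (S \<inter> ball z r) \<le> HA \<infinity> (real N) (G \<inter> ball z r)"
    using SG unfolding G_def by (intro HA_mono) auto
  also have "\<dots> \<le> ennreal (prodC N M * r ^ M) * HA \<infinity> (real N - real M) (fst ` (G \<inter> ball z r))"
    unfolding N_def M_def by (rule product_est[OF _ r MN]) auto
  also have "\<dots> \<le> ennreal (prodC N M * r ^ M) * ennreal (r powr (- real M) * L)"
    by (intro mult_left_mono Hq) auto
  also have "\<dots> = ennreal (prodC N M * r ^ M * (r powr (- real M) * L))"
    using P0 r by (intro ennreal_mult'[symmetric]) auto
  also have "prodC N M * r ^ M * (r powr (- real M) * L) = prodC N M * L"
  proof -
    have "r ^ M * r powr (- real M) = 1" using r by (simp add: powr_minus powr_realpow)
    then show ?thesis by (metis (no_types, lifting) mult.assoc mult.left_commute mult.right_neutral)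
  qed
  finally have le: "HA \<infinity> (real N) (S \<inter> ball z r) \<le> ennreal (prodC N M * L)" .
  have "ennreal (c * r powr real N) < ennreal (prodC N M * L)"
    using big[folded N_def] le unfolding c_def by (rule less_le_trans)
  then have lt: "c * r powr real N < prodC N M * L" by (rule ennreal_less_real)
  have cr: "c * r powr real N > 0" using c0 r by simp
  then have "L \<noteq> 0" using lt by auto
  then show si: "set_integrable lebesgue (fst ` (range (\<lambda>x. (x, f x)) \<inter> ball z (4 * r))) \<theta>"
    unfolding L_def A_def G_def set_lebesgue_integral_def set_integrable_def
    using not_integrable_integral_eq by blast
  have h1: "hcontrib (real N) (ball z (20 * r)) \<le> ennreal (alpha_q (real N) * ((40 * r) / 2) powr real N)"
  proof (rule hcontrib_le)
    fix a b assume "a \<in> ball z (20 * r)" "b \<in> ball z (20 * r)"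
    then have "dist z a < 20 * r" "dist z b < 20 * r" by auto
    then show "dist a b \<le> 40 * r" using dist_triangle[of a b z] by (simp add: dist_commute)
  qed (use r N0 in auto)
  have "alpha_q (real N) * ((40 * r) / 2) powr real N = alpha_q (real N) * 20 ^ N / c * (c * r powr real N)"
  proof -
    have "((40 * r) / 2) powr real N = 20 ^ N * r powr real N" using r by (simp add: powr_mult powr_realpow)
    then show ?thesis using c0 by (simp add: field_simps)
  qed
  also have "\<dots> \<le> alpha_q (real N) * 20 ^ N / c * (prodC N M * L)"
    using lt c0 alpha_q_pos[of "real N"] by (intro mult_left_mono) auto
  also have "\<dots> = mainC N M * L" unfolding mainC_def c_def by simp
  finally have h2: "alpha_q (real N) * ((40 * r) / 2) powr real N \<le> mainC N M * L" .
  have "ennreal (mainC N M * L) = ennreal (mainC N M) * ennreal L"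
    using mainC_pos[of M N] MN N0 unfolding M_def N_def by (intro ennreal_mult') auto
  also have "ennreal L \<le> (\<integral>\<^sup>+ x. ennreal (indicator A x *\<^sub>R \<theta> x) \<partial>lebesgue)"
    unfolding L_def set_lebesgue_integral_def
    by (rule ennreal_integral_le_nn) (use si in \<open>simp add: set_integrable_def A_def G_def\<close>)
  also have "\<dots> = (\<integral>\<^sup>+ x. indicator A x * ennreal (\<theta> x) \<partial>lebesgue)"
    by (simp add: indicator_ennreal)
  finally have h3: "ennreal (mainC N M * L) \<le> ennreal (mainC N M) * (\<integral>\<^sup>+ x. indicator A x * ennreal (\<theta> x) \<partial>lebesgue)"
    by (simp add: mult_left_mono)
  have "hcontrib (real N) (ball z (20 * r)) \<le> ennreal (mainC N M) * (\<integral>\<^sup>+ x. indicator A x * ennreal (\<theta> x) \<partial>lebesgue)"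
    using h1 ennreal_leI[OF h2] h3 by (rule order.trans[OF order.trans])
  then show "hcontrib (real CARD('n)) (ball z (20 * r)) \<le> ennreal (mainC CARD('n) CARD('m)) *
       (\<integral>\<^sup>+ x. indicator (fst ` (range (\<lambda>x. (x, f x)) \<inter> ball z (4 * r))) x * ennreal (\<theta> x) \<partial>lebesgue)"
    unfolding N_def M_def A_def G_def .
qed


lemma main_open:
  fixes f :: "real^'n \<Rightarrow> real^'m" and \<theta> :: "real^'n \<Rightarrow> real" and E U :: "(real^'n) set"
  assumes MN: "CARD('m) \<le> CARD('n)"
    and hyp: "\<And>z r. r > 0 \<Longrightarrow> enn2ereal (HA \<infinity> (real CARD('n) - real CARD('m)) (fst ` (range (\<lambda>x. (x, f x)) \<inter> ball z r)))
         \<le> ereal (r powr (- real CARD('m)) * (LINT x : fst ` (range (\<lambda>x. (x, f x)) \<inter> ball z (4 * r)) | lebesgue. \<theta> x))"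
    and U: "open U" and EU: "E \<subseteq> U"
  shows "HM (real CARD('n)) ((\<lambda>x. (x, f x)) ` E) \<le>
    ennreal (mainC CARD('n) CARD('m)) * (\<integral>\<^sup>+ x. indicator U x * ennreal (\<theta> x) \<partial>lebesgue)"
proof -
  define G where "G = range (\<lambda>x. (x, f x))"
  define S where "S = (\<lambda>x. (x, f x)) ` E"
  define c where "c = cbad (real CARD('n))"
  define Bad where "Bad = {z\<in>S. \<exists>r0>0. \<forall>r. 0 < r \<and> r < r0 \<longrightarrow>
     HA \<infinity> (real CARD('n)) (S \<inter> ball z r) \<le> ennreal (c * r powr real CARD('n))}"
  have HBad: "HM (real CARD('n)) Bad = 0" unfolding Bad_def c_def by (rule bad_null) simp
  define Good where "Good = S - Bad"
  define K where "K = ennreal (mainC CARD('n) CARD('m)) * (\<integral>\<^sup>+ x. indicator U x * ennreal (\<theta> x) \<partial>lebesgue)"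
  have SG: "S \<subseteq> G" unfolding S_def G_def by auto
  have "HM (real CARD('n)) Good \<le> K"
  proof (rule HM_le_HA_bound)
    fix \<delta> :: real assume \<delta>: "\<delta> > 0"
    have ex: "\<exists>r. 0 < r \<and> r < \<delta>/40 \<and> ball (fst z) (4*r) \<subseteq> U \<and>
        ennreal (c * r powr real CARD('n)) < HA \<infinity> (real CARD('n)) (S \<inter> ball z r)" if z: "z \<in> Good" for z
    proof -
      from z obtain x where x: "x \<in> E" "z = (x, f x)" unfolding Good_def S_def by auto
      obtain e where e: "e > 0" "ball x e \<subseteq> U" using U EU x(1) open_contains_ball by blast
      have "z \<in> S" "z \<notin> Bad" using z by (auto simp: Good_def)
      then have nb: "\<forall>r0>0. \<exists>r. 0 < r \<and> r < r0 \<and> \<not> HA \<infinity> (real CARD('n)) (S \<inter> ball z r) \<le> ennreal (c * r powr real CARD('n))"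
        unfolding Bad_def by auto
      have "min (\<delta>/40) (e/4) > 0" using \<delta> e by simp
      then obtain r where r: "0 < r" "r < min (\<delta>/40) (e/4)"
          "\<not> HA \<infinity> (real CARD('n)) (S \<inter> ball z r) \<le> ennreal (c * r powr real CARD('n))"
        using nb by blast
      have fz: "fst z = x" using x by simp
      have "ball (fst z) (4*r) \<subseteq> ball x e" unfolding fz using r by (intro subset_ball) auto
      then have "ball (fst z) (4*r) \<subseteq> U" using e by blast
      then show ?thesis using r by (intro exI[of _ r]) (auto simp: not_le)
    qed
    define rad where "rad = (\<lambda>z. SOME r. 0 < r \<and> r < \<delta>/40 \<and> ball (fst z) (4*r) \<subseteq> U \<and>
        ennreal (c * r powr real CARD('n)) < HA \<infinity> (real CARD('n)) (S \<inter> ball z r))"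
    have rad: "0 < rad z \<and> rad z < \<delta>/40 \<and> ball (fst z) (4 * rad z) \<subseteq> U \<and>
        ennreal (c * rad z powr real CARD('n)) < HA \<infinity> (real CARD('n)) (S \<inter> ball z (rad z))"
      if "z \<in> Good" for z
      unfolding rad_def by (rule someI_ex[OF ex[OF that]])
    have cov: "Good \<subseteq> (\<Union>i\<in>Good. ball i (4 * rad i))"
    proof
      fix z assume "z \<in> Good"
      then have "z \<in> ball z (4 * rad z)" using rad[of z] by simp
      then show "z \<in> (\<Union>i\<in>Good. ball i (4 * rad i))" using \<open>z \<in> Good\<close> by blast
    qed
    have radii: "\<And>i. i \<in> Good \<Longrightarrow> 0 < 4 * rad i \<and> 4 * rad i \<le> \<delta>/10"
      using rad by fastforce
    obtain C where C: "countable C" "C \<subseteq> Good"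
        "pairwise (\<lambda>i j. disjnt (ball i (4 * rad i)) (ball j (4 * rad j))) C"
        "Good \<subseteq> (\<Union>i\<in>C. ball i (5 * (4 * rad i)))"
      by (rule Vitali_covering_lemma_balls[where a="\<lambda>z. z" and r="\<lambda>z. 4 * rad z", OF cov radii]) auto
    define A where "A = (\<lambda>z. fst ` (G \<inter> ball z (4 * rad z)))"
    have AU: "A z \<subseteq> U" if "z \<in> C" for z
    proof
      fix x assume "x \<in> A z"
      then have "(x, f x) \<in> ball z (4 * rad z)" unfolding A_def G_def by auto
      then have "dist (fst z) x < 4 * rad z" using dist_fst_le[of z "(x, f x)"] by simp
      then have "x \<in> ball (fst z) (4 * rad z)" by simp
      moreover have "z \<in> Good" using that C(2) by blast
      then have "ball (fst z) (4 * rad z) \<subseteq> U" using rad[of z] by simp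
      ultimately show "x \<in> U" by blast
    qed
    have disj: "False" if "z \<in> C" "w \<in> C" "z \<noteq> w" "x \<in> A z" "x \<in> A w" for z w x
    proof -
      have "(x, f x) \<in> ball z (4 * rad z)" "(x, f x) \<in> ball w (4 * rad w)"
        using that(4,5) unfolding A_def G_def by auto
      moreover have "disjnt (ball z (4 * rad z)) (ball w (4 * rad w))"
        using C(3) that(1-3) unfolding pairwise_def by blast
      ultimately show False unfolding disjnt_def by blast
    qed
    have pb: "set_integrable lebesgue (A z) \<theta> \<and> hcontrib (real CARD('n)) (ball z (20 * rad z)) \<le>
        ennreal (mainC CARD('n) CARD('m)) * (\<integral>\<^sup>+ x. indicator (A z) x * ennreal (\<theta> x) \<partial>lebesgue)"
      if "z \<in> C" for z
    proof -
      have zG: "z \<in> Good" using that C(2) by blast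
      have r: "rad z > 0" using rad[OF zG] by simp
      have big: "ennreal (cbad (real CARD('n)) * rad z powr real CARD('n)) < HA \<infinity> (real CARD('n)) (S \<inter> ball z (rad z))"
        using rad[OF zG] unfolding c_def by simp
      show ?thesis
        using per_ball[OF MN hyp[OF r] r SG[unfolded G_def] big] unfolding A_def G_def by simp
    qed
    define idx where "idx = to_nat_on C"
    define zz where "zz = from_nat_into C"
    define I where "I = idx ` C"
    have zz_idx: "zz (idx z) = z" if "z \<in> C" for z
      unfolding zz_def idx_def using from_nat_into_to_nat_on[OF C(1) that] .
    have zzI: "zz n \<in> C" "idx (zz n) = n" if "n \<in> I" for n
      using that zz_idx unfolding I_def by auto
    define Y where "Y = (\<lambda>n. if n \<in> I then ball (zz n) (20 * rad (zz n)) else {})"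
    define h where "h = (\<lambda>n x. if n \<in> I then indicator (A (zz n)) x * ennreal (\<theta> x) else 0)"
    have hmeas: "h n \<in> borel_measurable lebesgue" for n
    proof (cases "n \<in> I")
      case True
      then have "set_integrable lebesgue (A (zz n)) \<theta>" using pb zzI by blast
      then have "(\<lambda>x. indicator (A (zz n)) x *\<^sub>R \<theta> x) \<in> borel_measurable lebesgue"
        unfolding set_integrable_def by blast
      then have "(\<lambda>x. ennreal (indicator (A (zz n)) x *\<^sub>R \<theta> x)) \<in> borel_measurable lebesgue"
        by measurable
      then show ?thesis using True unfolding h_def by (simp add: indicator_ennreal)
    qed (simp add: h_def)
    have "HA (ennreal \<delta>) (real CARD('n)) Good \<le> (\<Sum>n. hcontrib (real CARD('n)) (Y n))"
    proof (rule HA_le_cover)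
      show "Good \<subseteq> (\<Union>n. Y n)"
      proof
        fix y assume "y \<in> Good"
        then obtain i where i: "i \<in> C" "y \<in> ball i (5 * (4 * rad i))" using C(4) by blast
        then have "idx i \<in> I" "zz (idx i) = i" using zz_idx unfolding I_def by auto
        then have "y \<in> Y (idx i)" using i unfolding Y_def by simp
        then show "y \<in> (\<Union>n. Y n)" by blast
      qed
      show "ediam (Y n) \<le> ennreal \<delta>" for n
      proof (cases "n \<in> I")
        case True
        have "rad (zz n) < \<delta>/40" using rad[of "zz n"] zzI(1)[OF True] C(2) by blast
        then have "ediam (ball (zz n) (20 * rad (zz n))) \<le> ennreal \<delta>"
        proof (intro ediam_le)
          fix a b assume "a \<in> ball (zz n) (20 * rad (zz n))" "b \<in> ball (zz n) (20 * rad (zz n))"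
          then have "dist (zz n) a < 20 * rad (zz n)" "dist (zz n) b < 20 * rad (zz n)" by auto
          moreover assume "rad (zz n) < \<delta>/40"
          ultimately show "dist a b \<le> \<delta>" using dist_triangle[of a b "zz n"] by (simp add: dist_commute)
        qed (use \<delta> in simp)
        then show ?thesis using True unfolding Y_def by simp
      qed (simp add: Y_def)
    qed
    also have "\<dots> \<le> (\<Sum>n. ennreal (mainC CARD('n) CARD('m)) * (\<integral>\<^sup>+ x. h n x \<partial>lebesgue))"
    proof (intro suminf_le allI)
      fix n show "hcontrib (real CARD('n)) (Y n) \<le> ennreal (mainC CARD('n) CARD('m)) * (\<integral>\<^sup>+ x. h n x \<partial>lebesgue)"
      proof (cases "n \<in> I")
        case True
        then show ?thesis using pb[OF zzI(1)[OF True]] unfolding Y_def h_def by simp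
      qed (simp add: Y_def)
    qed auto
    also have "\<dots> = ennreal (mainC CARD('n) CARD('m)) * (\<Sum>n. (\<integral>\<^sup>+ x. h n x \<partial>lebesgue))"
      by (rule ennreal_suminf_cmult)
    also have "(\<Sum>n. (\<integral>\<^sup>+ x. h n x \<partial>lebesgue)) = (\<integral>\<^sup>+ x. (\<Sum>n. h n x) \<partial>lebesgue)"
      by (rule nn_integral_suminf[symmetric]) (rule hmeas)
    also have "(\<integral>\<^sup>+ x. (\<Sum>n. h n x) \<partial>lebesgue) \<le> (\<integral>\<^sup>+ x. indicator U x * ennreal (\<theta> x) \<partial>lebesgue)"
    proof (rule nn_integral_mono)
      fix x
      show "(\<Sum>n. h n x) \<le> indicator U x * ennreal (\<theta> x)"
      proof (rule suminf_at_most_one)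
        fix n m assume "h n x \<noteq> 0" "h m x \<noteq> 0"
        then have nm: "n \<in> I" "m \<in> I" "x \<in> A (zz n)" "x \<in> A (zz m)" unfolding h_def
          by (auto split: if_splits simp: indicator_def)
        show "n = m"
        proof (rule ccontr)
          assume "n \<noteq> m"
          then have "zz n \<noteq> zz m" using zzI(2)[OF nm(1)] zzI(2)[OF nm(2)] by metis
          then show False using disj[OF zzI(1)[OF nm(1)] zzI(1)[OF nm(2)] _ nm(3,4)] by blast
        qed
      next
        fix n
        show "h n x \<le> indicator U x * ennreal (\<theta> x)"
        proof (cases "n \<in> I \<and> x \<in> A (zz n)")
          case True
          then have "x \<in> U" using AU zzI by blast
          then show ?thesis using True unfolding h_def by simp
        next
          case False
          then have "h n x = 0" unfolding h_def by (auto simp: indicator_def)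
          then show ?thesis by simp
        qed
      qed
    qed
    finally show "HA (ennreal \<delta>) (real CARD('n)) Good \<le> K" unfolding K_def by (simp add: mult_left_mono)
  qed
  have "S \<subseteq> Good \<union> Bad" by (auto simp: Good_def)
  then have "HM (real CARD('n)) S \<le> HM (real CARD('n)) (Good \<union> Bad)" by (rule HM_mono)
  also have "\<dots> \<le> HM (real CARD('n)) Good + HM (real CARD('n)) Bad" by (rule HM_Un)
  also have "\<dots> \<le> K" using HBad \<open>HM (real CARD('n)) Good \<le> K\<close> by simp
  finally show ?thesis unfolding S_def K_def .
qed


lemma theta_cball:
  fixes \<theta> :: "'a::euclidean_space \<Rightarrow> real"
  assumes li: "locally_integrable \<theta>"
  shows "(\<lambda>x. indicator (cball 0 R) x * ennreal (\<theta> x)) \<in> borel_measurable lebesgue"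
    and "(\<integral>\<^sup>+ x. indicator (cball 0 R) x * ennreal (\<theta> x) \<partial>lebesgue) < \<infinity>"
proof -
  have si: "integrable lebesgue (\<lambda>x. indicator (cball (0::'a) R) x *\<^sub>R \<theta> x)"
    using li unfolding locally_integrable_def set_integrable_def by auto
  then have m: "(\<lambda>x. indicator (cball (0::'a) R) x *\<^sub>R \<theta> x) \<in> borel_measurable lebesgue" by blast
  then have "(\<lambda>x. ennreal (indicator (cball (0::'a) R) x *\<^sub>R \<theta> x)) \<in> borel_measurable lebesgue"
    by measurable
  then show "(\<lambda>x. indicator (cball 0 R) x * ennreal (\<theta> x)) \<in> borel_measurable lebesgue"
    by (simp add: indicator_ennreal)
  have "(\<integral>\<^sup>+ x. indicator (cball 0 R) x * ennreal (\<theta> x) \<partial>lebesgue) =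
      (\<integral>\<^sup>+ x. ennreal (indicator (cball (0::'a) R) x *\<^sub>R \<theta> x) \<partial>lebesgue)"
    by (simp add: indicator_ennreal)
  also have "\<dots> \<le> (\<integral>\<^sup>+ x. ennreal (norm (indicator (cball (0::'a) R) x *\<^sub>R \<theta> x)) \<partial>lebesgue)"
    by (intro nn_integral_mono ennreal_leI) auto
  also have "\<dots> < \<infinity>" using si unfolding integrable_iff_bounded by blast
  finally show "(\<integral>\<^sup>+ x. indicator (cball 0 R) x * ennreal (\<theta> x) \<partial>lebesgue) < \<infinity>" .
qed

lemma theta_meas:
  fixes \<theta> :: "'a::euclidean_space \<Rightarrow> real"
  assumes li: "locally_integrable \<theta>" and X: "X \<subseteq> cball 0 R" "X \<in> sets lebesgue"
  shows "(\<lambda>x. indicator X x * ennreal (\<theta> x)) \<in> borel_measurable lebesgue"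
proof -
  have "(\<lambda>x. indicator X x * (indicator (cball 0 R) x * ennreal (\<theta> x))) \<in> borel_measurable lebesgue"
    using theta_cball(1)[OF li, of R] X(2) by measurable
  moreover have "(\<lambda>x. indicator X x * (indicator (cball 0 R) x * ennreal (\<theta> x))) = (\<lambda>x. indicator X x * ennreal (\<theta> x))"
    using X(1) by (auto simp: indicator_def fun_eq_iff)
  ultimately show ?thesis by simp
qed

lemma theta_fin:
  fixes \<theta> :: "'a::euclidean_space \<Rightarrow> real"
  assumes li: "locally_integrable \<theta>" and X: "X \<subseteq> cball 0 R"
  shows "(\<integral>\<^sup>+ x. indicator X x * ennreal (\<theta> x) \<partial>lebesgue) < \<infinity>"
proof -
  have "(\<integral>\<^sup>+ x. indicator X x * ennreal (\<theta> x) \<partial>lebesgue) \<le> (\<integral>\<^sup>+ x. indicator (cball 0 R) x * ennreal (\<theta> x) \<partial>lebesgue)"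
    using X by (intro nn_integral_mono) (auto simp: indicator_def)
  also have "\<dots> < \<infinity>" by (rule theta_cball(2)[OF li])
  finally show ?thesis .
qed

lemma outer_approx:
  fixes \<theta> :: "'a::euclidean_space \<Rightarrow> real"
  assumes li: "locally_integrable \<theta>" and E: "E \<in> sets lebesgue" "E \<subseteq> ball 0 R"
  obtains V :: "nat \<Rightarrow> 'a set" where "\<And>k. open (V k)" "\<And>k. E \<subseteq> V k"
    "(INF k. (\<integral>\<^sup>+ x. indicator (V k) x * ennreal (\<theta> x) \<partial>lebesgue)) \<le> (\<integral>\<^sup>+ x. indicator E x * ennreal (\<theta> x) \<partial>lebesgue)"
proof -
  have "\<forall>k::nat. \<exists>T. open T \<and> E \<subseteq> T \<and> (T - E) \<in> lmeasurable \<and> emeasure lebesgue (T - E) < ennreal (1 / real (Suc k))"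
  proof
    fix k :: nat
    have "1 / real (Suc k) > 0" by simp
    from sets_lebesgue_outer_open[OF E(1) this] obtain T where
      "open T" "E \<subseteq> T" "(T - E) \<in> lmeasurable" "emeasure lebesgue (T - E) < ennreal (1 / real (Suc k))" .
    then show "\<exists>T. open T \<and> E \<subseteq> T \<and> (T - E) \<in> lmeasurable \<and> emeasure lebesgue (T - E) < ennreal (1 / real (Suc k))"
      by blast
  qed
  from choice[OF this] obtain T where T0: "\<forall>k. open (T k) \<and> E \<subseteq> T k \<and> (T k - E) \<in> lmeasurable \<and>
     emeasure lebesgue (T k - E) < ennreal (1 / real (Suc k))" by blast
  have T: "\<And>k. open (T k)" "\<And>k. E \<subseteq> T k" "\<And>k. emeasure lebesgue (T k - E) < ennreal (1 / real (Suc k))"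
    using T0 by auto
  define V where "V = (\<lambda>k. ball 0 R \<inter> (\<Inter>j\<in>{..k}. T j))"
  have Vo: "open (V k)" for k unfolding V_def using T(1) by (intro open_Int open_INT) auto
  have VE: "E \<subseteq> V k" for k unfolding V_def using T(2) E(2) by auto
  have Vdec: "decseq V" unfolding V_def decseq_def by auto
  have VB: "V k \<subseteq> cball 0 R" for k unfolding V_def by auto
  define F where "F = (\<lambda>k x. indicator (V k) x * ennreal (\<theta> x))"
  have Fm: "F k \<in> borel_measurable lebesgue" for k
    unfolding F_def using Vo[of k] VB[of k] by (intro theta_meas[OF li]) auto
  have Fdec: "decseq F"
  proof (intro decseq_SucI le_funI)
    fix k x show "F (Suc k) x \<le> F k x"
      using decseqD[OF Vdec, of k "Suc k"] unfolding F_def by (auto simp: indicator_def)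
  qed
  have Ffin: "(\<integral>\<^sup>+ x. F k x \<partial>lebesgue) < \<infinity>" for k unfolding F_def by (rule theta_fin[OF li VB])
  have mc: "(\<integral>\<^sup>+ x. (INF k. F k x) \<partial>lebesgue) = (INF k. integral\<^sup>N lebesgue (F k))"
    by (rule nn_integral_monotone_convergence_INF_decseq[OF Fdec Fm Ffin])
  define N where "N = (\<Inter>k. V k) - E"
  have Nnull: "N \<in> null_sets lebesgue"
  proof -
    have Vm: "V k \<in> sets lebesgue" for k using Vo[of k] by auto
    have "(\<Inter>k. V k) \<in> sets lebesgue" by (rule sets.countable_INT) (use Vm in auto)
    then have Nm: "N \<in> sets lebesgue" unfolding N_def using E(1) by (rule sets.Diff)
    have Nk: "emeasure lebesgue N \<le> ennreal (1 / real (Suc k))" for k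
    proof -
      have sub: "N \<subseteq> T k - E" unfolding N_def V_def by blast
      have "T k \<in> sets lebesgue" using T(1)[of k] by auto
      then have "T k - E \<in> sets lebesgue" using E(1) by (rule sets.Diff)
      then have "emeasure lebesgue N \<le> emeasure lebesgue (T k - E)" by (rule emeasure_mono[OF sub])
      also have "\<dots> \<le> ennreal (1 / real (Suc k))" using T(3)[of k] by (rule less_imp_le)
      finally show ?thesis .
    qed
    have "emeasure lebesgue N \<le> 0"
    proof (rule ennreal_le_epsilon)
      fix e :: real assume e: "e > 0"
      obtain k where k: "inverse (real (Suc k)) < e" using reals_Archimedean[OF e] by blast
      have "ennreal (1 / real (Suc k)) \<le> ennreal e" using k by (intro ennreal_leI) (simp add: inverse_eq_divide)
      then show "emeasure lebesgue N \<le> 0 + ennreal e" using Nk[of k] by simp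
    qed
    then show ?thesis using Nm by (simp add: null_sets_def)
  qed
  have cg: "(\<integral>\<^sup>+ x. (INF k. F k x) \<partial>lebesgue) = (\<integral>\<^sup>+ x. indicator E x * ennreal (\<theta> x) \<partial>lebesgue)"
  proof (rule nn_integral_cong_AE)
    have "AE x in lebesgue. x \<notin> N" using Nnull by (rule AE_not_in)
    then show "AE x in lebesgue. (INF k. F k x) = indicator E x * ennreal (\<theta> x)"
    proof (rule AE_mp)
      show "AE x in lebesgue. x \<notin> N \<longrightarrow> (INF k. F k x) = indicator E x * ennreal (\<theta> x)"
      proof (rule AE_I2, rule impI)
        fix x assume "x \<notin> N"
        show "(INF k. F k x) = indicator E x * ennreal (\<theta> x)"
        proof (cases "x \<in> E")
          case True
          then have "F k x = ennreal (\<theta> x)" for k using VE[of k] unfolding F_def by auto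
          then show ?thesis using True by simp
        next
          case False
          then obtain k where "x \<notin> V k" using \<open>x \<notin> N\<close> unfolding N_def by auto
          then have "F k x = 0" unfolding F_def by simp
          then have "(INF k. F k x) \<le> 0" by (metis INF_lower UNIV_I)
          then show ?thesis using False by simp
        qed
      qed
    qed
  qed
  have "(INF k. (\<integral>\<^sup>+ x. indicator (V k) x * ennreal (\<theta> x) \<partial>lebesgue)) = (\<integral>\<^sup>+ x. indicator E x * ennreal (\<theta> x) \<partial>lebesgue)"
    using mc cg unfolding F_def by simp
  note eq = this
  show ?thesis
  proof (rule that[of V])
    show "open (V k)" for k by (rule Vo)
    show "E \<subseteq> V k" for k by (rule VE)
    show "(INF k. (\<integral>\<^sup>+ x. indicator (V k) x * ennreal (\<theta> x) \<partial>lebesgue)) \<le> (\<integral>\<^sup>+ x. indicator E x * ennreal (\<theta> x) \<partial>lebesgue)"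
      using eq by simp
  qed
qed


lemma bounded_case:
  fixes f :: "real^'n \<Rightarrow> real^'m" and \<theta> :: "real^'n \<Rightarrow> real" and E :: "(real^'n) set"
  assumes MN: "CARD('m) \<le> CARD('n)"
    and hyp: "\<And>z r. r > 0 \<Longrightarrow> enn2ereal (HA \<infinity> (real CARD('n) - real CARD('m)) (fst ` (range (\<lambda>x. (x, f x)) \<inter> ball z r)))
         \<le> ereal (r powr (- real CARD('m)) * (LINT x : fst ` (range (\<lambda>x. (x, f x)) \<inter> ball z (4 * r)) | lebesgue. \<theta> x))"
    and li: "locally_integrable \<theta>" and E: "E \<in> sets lebesgue" "E \<subseteq> ball 0 R"
  shows "HM (real CARD('n)) ((\<lambda>x. (x, f x)) ` E) \<le>
    ennreal (mainC CARD('n) CARD('m)) * (\<integral>\<^sup>+ x. indicator E x * ennreal (\<theta> x) \<partial>lebesgue)"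
proof -
  obtain V :: "nat \<Rightarrow> (real^'n) set" where V: "\<And>k. open (V k)" "\<And>k. E \<subseteq> V k"
    "(INF k. (\<integral>\<^sup>+ x. indicator (V k) x * ennreal (\<theta> x) \<partial>lebesgue)) \<le> (\<integral>\<^sup>+ x. indicator E x * ennreal (\<theta> x) \<partial>lebesgue)"
    by (rule outer_approx[OF li E]) blast
  have c: "0 < ennreal (mainC CARD('n) CARD('m))" "ennreal (mainC CARD('n) CARD('m)) < top"
    using mainC_pos[OF MN] by auto
  have "HM (real CARD('n)) ((\<lambda>x. (x, f x)) ` E) \<le>
      ennreal (mainC CARD('n) CARD('m)) * (INF k. (\<integral>\<^sup>+ x. indicator (V k) x * ennreal (\<theta> x) \<partial>lebesgue))"
    by (rule mult_INF_ge_ennreal[OF c], rule main_open[OF MN hyp V(1) V(2)]) auto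
  also have "\<dots> \<le> ennreal (mainC CARD('n) CARD('m)) * (\<integral>\<^sup>+ x. indicator E x * ennreal (\<theta> x) \<partial>lebesgue)"
    by (intro mult_left_mono V(3)) simp
  finally show ?thesis .
qed

lemma general_case:
  fixes f :: "real^'n \<Rightarrow> real^'m" and \<theta> :: "real^'n \<Rightarrow> real" and E :: "(real^'n) set"
  assumes MN: "CARD('m) \<le> CARD('n)"
    and hyp: "\<And>z r. r > 0 \<Longrightarrow> enn2ereal (HA \<infinity> (real CARD('n) - real CARD('m)) (fst ` (range (\<lambda>x. (x, f x)) \<inter> ball z r)))
         \<le> ereal (r powr (- real CARD('m)) * (LINT x : fst ` (range (\<lambda>x. (x, f x)) \<inter> ball z (4 * r)) | lebesgue. \<theta> x))"
    and li: "locally_integrable \<theta>" and E: "E \<in> sets lebesgue"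
  shows "HM (real CARD('n)) ((\<lambda>x. (x, f x)) ` E) \<le>
    ennreal (mainC CARD('n) CARD('m)) * (\<integral>\<^sup>+ x. indicator E x * ennreal (\<theta> x) \<partial>lebesgue)"
proof -
  define Ek where "Ek = (\<lambda>k::nat. (E \<inter> ball 0 (real k + 1)) - ball 0 (real k))"
  have Ekm: "Ek k \<in> sets lebesgue" for k
  proof -
    have "ball (0::real^'n) (real k + 1) \<in> sets lebesgue" "ball (0::real^'n) (real k) \<in> sets lebesgue" by auto
    then show ?thesis unfolding Ek_def using E by (intro sets.Diff sets.Int) auto
  qed
  have EkB: "Ek k \<subseteq> ball 0 (real k + 1)" for k unfolding Ek_def by auto
  have disj: "disjoint_family Ek"
    unfolding disjoint_family_on_def
  proof (intro ballI impI)
    fix k j :: nat assume "k \<noteq> j"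
    show "Ek k \<inter> Ek j = {}"
    proof (rule ccontr)
      assume "Ek k \<inter> Ek j \<noteq> {}"
      then obtain x where "x \<in> Ek k" "x \<in> Ek j" by blast
      then have "real k \<le> norm x" "norm x < real k + 1" "real j \<le> norm x" "norm x < real j + 1"
        unfolding Ek_def by (auto simp: dist_norm)
      then have "real k < real j + 1" "real j < real k + 1" by linarith+
      then show False using \<open>k \<noteq> j\<close> by linarith
    qed
  qed
  have Eun: "E = (\<Union>k. Ek k)"
  proof
    show "E \<subseteq> (\<Union>k. Ek k)"
    proof
      fix x assume x: "x \<in> E"
      define k where "k = nat \<lfloor>norm x\<rfloor>"
      have "real k \<le> norm x" "norm x < real k + 1" unfolding k_def
        by (simp_all add: of_nat_nat)
      then have "x \<in> Ek k" using x unfolding Ek_def by (auto simp: dist_norm)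
      then show "x \<in> (\<Union>k. Ek k)" by blast
    qed
  qed (auto simp: Ek_def)
  have "HM (real CARD('n)) ((\<lambda>x. (x, f x)) ` E) = HM (real CARD('n)) (\<Union>k. (\<lambda>x. (x, f x)) ` Ek k)"
    by (subst Eun) (simp add: image_UN)
  also have "\<dots> \<le> (\<Sum>k. HM (real CARD('n)) ((\<lambda>x. (x, f x)) ` Ek k))" by (rule HM_subadd)
  also have "\<dots> \<le> (\<Sum>k. ennreal (mainC CARD('n) CARD('m)) * (\<integral>\<^sup>+ x. indicator (Ek k) x * ennreal (\<theta> x) \<partial>lebesgue))"
    by (intro suminf_le allI bounded_case[OF MN hyp li Ekm EkB]) auto
  also have "\<dots> = ennreal (mainC CARD('n) CARD('m)) * (\<Sum>k. (\<integral>\<^sup>+ x. indicator (Ek k) x * ennreal (\<theta> x) \<partial>lebesgue))"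
    by (rule ennreal_suminf_cmult)
  also have "(\<Sum>k. (\<integral>\<^sup>+ x. indicator (Ek k) x * ennreal (\<theta> x) \<partial>lebesgue)) =
      (\<integral>\<^sup>+ x. (\<Sum>k. indicator (Ek k) x * ennreal (\<theta> x)) \<partial>lebesgue)"
  proof (rule nn_integral_suminf[symmetric])
    fix k
    have "Ek k \<subseteq> cball 0 (real k + 1)" using EkB[of k] by auto
    then show "(\<lambda>x. indicator (Ek k) x * ennreal (\<theta> x)) \<in> borel_measurable lebesgue"
      by (rule theta_meas[OF li _ Ekm])
  qed
  also have "(\<lambda>x. (\<Sum>k. indicator (Ek k) x * ennreal (\<theta> x))) = (\<lambda>x. indicator E x * ennreal (\<theta> x))"
  proof
    fix x
    have "(\<Sum>k. indicator (Ek k) x * ennreal (\<theta> x)) = (\<Sum>k. indicator (Ek k) x) * ennreal (\<theta> x)"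
      by (rule ennreal_suminf_multc)
    also have "(\<Sum>k. indicator (Ek k) x :: ennreal) = indicator (\<Union>k. Ek k) x"
      by (rule suminf_indicator[OF disj])
    finally show "(\<Sum>k. indicator (Ek k) x * ennreal (\<theta> x)) = indicator E x * ennreal (\<theta> x)"
      using Eun by simp
  qed
  finally show ?thesis .
qed

theorem theorem4p4:
  assumes "CARD('m) \<le> CARD('n)"
  shows "\<exists>C::real. C > 0 \<and>
    (\<forall>(f :: real^'n \<Rightarrow> real^'m) (\<theta> :: real^'n \<Rightarrow> real).
      W11_loc f \<and> locally_integrable \<theta> \<and>
      (\<forall>(z :: (real^'n) \<times> (real^'m)) r. r > 0 \<longrightarrow>
         enn2ereal (hausdorff_content (real CARD('n) - real CARD('m))
                      (fst ` (range (\<lambda>x. (x, f x)) \<inter> ball z r)))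
         \<le> ereal (r powr (- real CARD('m)) *
              (LINT x : fst ` (range (\<lambda>x. (x, f x)) \<inter> ball z (4 * r)) | lebesgue. \<theta> x)))
      \<longrightarrow> (\<forall>E \<in> sets lebesgue.
             hausdorff_measure (real CARD('n)) ((\<lambda>x. (x, f x)) ` E)
               \<le> ennreal C * (\<integral>\<^sup>+ x \<in> E. ennreal (\<theta> x) \<partial>lebesgue))
        \<and> (\<forall>E \<in> null_sets lebesgue.
             hausdorff_measure (real CARD('n)) ((\<lambda>x. (x, f x)) ` E) = 0))"
proof (intro exI[of _ "mainC CARD('n) CARD('m)"] conjI allI impI)
  show "mainC CARD('n) CARD('m) > 0" using mainC_pos[OF assms] by simp
  fix f :: "real^'n \<Rightarrow> real^'m" and \<theta> :: "real^'n \<Rightarrow> real"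
  assume H: "W11_loc f \<and> locally_integrable \<theta> \<and>
      (\<forall>(z :: (real^'n) \<times> (real^'m)) r. r > 0 \<longrightarrow>
         enn2ereal (hausdorff_content (real CARD('n) - real CARD('m))
                      (fst ` (range (\<lambda>x. (x, f x)) \<inter> ball z r)))
         \<le> ereal (r powr (- real CARD('m)) *
              (LINT x : fst ` (range (\<lambda>x. (x, f x)) \<inter> ball z (4 * r)) | lebesgue. \<theta> x)))"
  then have li: "locally_integrable \<theta>" by blast
  have hyp: "\<And>z r. r > 0 \<Longrightarrow> enn2ereal (HA \<infinity> (real CARD('n) - real CARD('m)) (fst ` (range (\<lambda>x. (x, f x)) \<inter> ball z r)))
         \<le> ereal (r powr (- real CARD('m)) * (LINT x : fst ` (range (\<lambda>x. (x, f x)) \<inter> ball z (4 * r)) | lebesgue. \<theta> x))"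
    using H unfolding hausdorff_content_def by blast
  have gen: "HM (real CARD('n)) ((\<lambda>x. (x, f x)) ` E) \<le>
      ennreal (mainC CARD('n) CARD('m)) * (\<integral>\<^sup>+ x \<in> E. ennreal (\<theta> x) \<partial>lebesgue)"
    if E: "E \<in> sets lebesgue" for E :: "(real^'n) set"
    using general_case[OF assms hyp li E] by (simp add: mult.commute)
  show "\<forall>E \<in> sets lebesgue. hausdorff_measure (real CARD('n)) ((\<lambda>x. (x, f x)) ` E)
               \<le> ennreal (mainC CARD('n) CARD('m)) * (\<integral>\<^sup>+ x \<in> E. ennreal (\<theta> x) \<partial>lebesgue)"
    using gen by blast
  show "\<forall>E \<in> null_sets lebesgue. hausdorff_measure (real CARD('n)) ((\<lambda>x. (x, f x)) ` E) = 0"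
  proof
    fix E :: "(real^'n) set" assume E: "E \<in> null_sets lebesgue"
    then have "HM (real CARD('n)) ((\<lambda>x. (x, f x)) ` E) \<le>
      ennreal (mainC CARD('n) CARD('m)) * (\<integral>\<^sup>+ x \<in> E. ennreal (\<theta> x) \<partial>lebesgue)"
      by (intro gen) auto
    also have "(\<integral>\<^sup>+ x \<in> E. ennreal (\<theta> x) \<partial>lebesgue) = 0" by (rule nn_integral_null_set[OF E])
    finally show "hausdorff_measure (real CARD('n)) ((\<lambda>x. (x, f x)) ` E) = 0" by simp
  qed
qed

end
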